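(* With $\chi=1$ the trivial character, $\mathcal S^*(\mathcal O_1)^{\chi}=\mathcal S^*(\mathcal O_1)^{\chi,\infty}$; that is, every generalized $(G,\chi)$-invariant vector of $\mathcal S^*(\mathcal O_1)\otimes(|\det|\boxtimes|\det|^{-1})$ is $(G,\chi)$-invariant.
   Context: $F$ nonarchimedean local field of characteristic $0$, $G=G'=\mathrm{GL}_2(F)$ acting on $M_2:=M_{2\times2}(F)$, $\mathcal O_1$ the set of rank one matrices, $\mathcal S(\mathcal O_1)$ locally constant compactly supported functions on $\mathcal O_1$ with $((g_1,g_2)f)(M)=f(g_1^{-1}Mg_2)$, $\mathcal S^*(\mathcal O_1)$ its algebraic dual with contragredient action. For a character $\chi$ of $G$, $\mathcal S^*(\mathcal O_1)^\chi$ is the space of $G$-invariant vectors (first factor) in $\mathcal S^*(\mathcal O_1)\otimes(|\det|\boxtimes|\det|^{-1})\otimes\chi^{-1}$. A vector $v$ of a $G$-representation is generalized $\chi$-invariant if for some $k\ge0$, $(g_0-\chi(g_0))\cdots(g_k-\chi(g_k))v=0$ for all $g_0,\dots,g_k\in G$; $\mathcal S^*(\mathcal O_1)^{\chi,\infty}$ is the space of generalized $(G,\chi)$-invariant vectors in $\mathcal S^*(\mathcal O_1)\otimes(|\det|\boxtimes|\det|^{-1})$. *)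

theory Defs
  imports "HOL-Analysis.Analysis"
begin

definition F_dist :: "('a::field \<Rightarrow> real) \<Rightarrow> 'a \<Rightarrow> 'a \<Rightarrow> real" where
  "F_dist absF x y = absF (x - y)"

definition integers_F :: "('a::field \<Rightarrow> real) \<Rightarrow> 'a set" where
  "integers_F absF = {x. absF x \<le> 1}"

definition residue_field_F :: "('a::field \<Rightarrow> real) \<Rightarrow> 'a set set" where
  "residue_field_F absF =
     integers_F absF // {(x, y). x \<in> integers_F absF \<and> y \<in> integers_F absF \<and> absF (x - y) < 1}"

text \<open>absF is the normalized absolute value of a nonarchimedean local field
  (of characteristic 0, which is enforced by the type class field_char_0):
  a nonarchimedean absolute value, discrete, complete, finite residue field of
  cardinality q, and normalized so that a uniformizer has absolute value 1/q.\<close>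
definition nonarch_local_field :: "('a::field_char_0 \<Rightarrow> real) \<Rightarrow> bool" where
  "nonarch_local_field absF \<longleftrightarrow>
     (\<forall>x. 0 \<le> absF x) \<and> (\<forall>x. absF x = 0 \<longleftrightarrow> x = 0) \<and>
     (\<forall>x y. absF (x * y) = absF x * absF y) \<and>
     (\<forall>x y. absF (x + y) \<le> max (absF x) (absF y)) \<and>
     Metric_space.mcomplete (UNIV::'a set) (F_dist absF) \<and>
     finite (residue_field_F absF) \<and>
     (\<exists>p. 0 < absF p \<and> absF p < 1 \<and> (\<forall>x. absF x < 1 \<longrightarrow> absF x \<le> absF p) \<and>
          absF p = 1 / real (card (residue_field_F absF)))"

type_synonym 'a mat2 = "'a^2^2"

definition GL2 :: "'a::field mat2 set" where
  "GL2 = {g. det g \<noteq> 0}"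

text \<open>For 2x2 matrices: rank one iff nonzero and singular.\<close>
definition O1 :: "'a::field mat2 set" where
  "O1 = {M. M \<noteq> 0 \<and> det M = 0}"

definition mat_dist :: "('a::field \<Rightarrow> real) \<Rightarrow> 'a mat2 \<Rightarrow> 'a mat2 \<Rightarrow> real" where
  "mat_dist absF M N = Max {absF (M $ i $ j - N $ i $ j) | i j. True}"

definition mat_topology :: "('a::field \<Rightarrow> real) \<Rightarrow> 'a mat2 topology" where
  "mat_topology absF = Metric_space.mtopology UNIV (mat_dist absF)"

text \<open>Functions on O_1 are represented as functions on M_2 vanishing outside O_1.\<close>
definition S_O1 :: "('a::field \<Rightarrow> real) \<Rightarrow> ('a mat2 \<Rightarrow> complex) set" where
  "S_O1 absF = {f.
     (\<forall>M. M \<notin> O1 \<longrightarrow> f M = 0) \<and>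
     (\<forall>M\<in>O1. \<exists>r>0. \<forall>N\<in>O1. mat_dist absF M N < r \<longrightarrow> f N = f M) \<and>
     (\<exists>K. compactin (subtopology (mat_topology absF) O1) K \<and> {M \<in> O1. f M \<noteq> 0} \<subseteq> K)}"

text \<open>Algebraic dual: complex-linear functionals on S(O_1), extended by 0 outside.\<close>
definition S_dual :: "('a::field \<Rightarrow> real) \<Rightarrow> (('a mat2 \<Rightarrow> complex) \<Rightarrow> complex) set" where
  "S_dual absF = {l.
     (\<forall>f\<in>S_O1 absF. \<forall>h\<in>S_O1 absF. l (\<lambda>M. f M + h M) = l f + l h) \<and>
     (\<forall>f\<in>S_O1 absF. \<forall>c. l (\<lambda>M. c * f M) = c * l f) \<and>
     (\<forall>f. f \<notin> S_O1 absF \<longrightarrow> l f = 0)}"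

text \<open>Action of g in G (first factor) on S^*(O_1) twisted by |det| (boxtimes |det|^-1):
  ((g,1) f)(M) = f(g^-1 M), contragredient (g l)(f) = l((g^-1,1) f) = l(M |-> f (g M)),
  times |det g|.\<close>
definition act :: "('a::field \<Rightarrow> real) \<Rightarrow> 'a mat2 \<Rightarrow> (('a mat2 \<Rightarrow> complex) \<Rightarrow> complex)
                    \<Rightarrow> (('a mat2 \<Rightarrow> complex) \<Rightarrow> complex)" where
  "act absF g l = (\<lambda>f. if f \<in> S_O1 absF
                        then complex_of_real (absF (det g)) * l (\<lambda>M. f (g ** M)) else 0)"

text \<open>(g - chi(g)) v with chi trivial.\<close>
definition act_minus_id :: "('a::field \<Rightarrow> real) \<Rightarrow> 'a mat2 \<Rightarrow> (('a mat2 \<Rightarrow> complex) \<Rightarrow> complex)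
                    \<Rightarrow> (('a mat2 \<Rightarrow> complex) \<Rightarrow> complex)" where
  "act_minus_id absF g l = (\<lambda>f. act absF g l f - l f)"

definition gen_invariant :: "('a::field \<Rightarrow> real) \<Rightarrow> (('a mat2 \<Rightarrow> complex) \<Rightarrow> complex) \<Rightarrow> bool" where
  "gen_invariant absF l \<longleftrightarrow> l \<in> S_dual absF \<and>
     (\<exists>k::nat. \<forall>gs. length gs = Suc k \<and> set gs \<subseteq> GL2 \<longrightarrow>
         foldr (act_minus_id absF) gs l = (\<lambda>f. 0))"

definition invariant :: "('a::field \<Rightarrow> real) \<Rightarrow> (('a mat2 \<Rightarrow> complex) \<Rightarrow> complex) \<Rightarrow> bool" where
  "invariant absF l \<longleftrightarrow> l \<in> S_dual absF \<and> (\<forall>g\<in>GL2. act absF g l = l)"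

end

theory Submission
  imports Defs
begin

locale NLF =
  fixes absF :: "'a::field_char_0 \<Rightarrow> real"
  assumes N: "nonarch_local_field absF"
begin

lemma abs_nonneg[simp]: "0 \<le> absF x"
  using N unfolding nonarch_local_field_def by blast
lemma abs_zero_iff[simp]: "absF x = 0 \<longleftrightarrow> x = 0"
  using N unfolding nonarch_local_field_def by blast
lemma abs_mult: "absF (x * y) = absF x * absF y"
  using N unfolding nonarch_local_field_def by blast
lemma abs_ultra: "absF (x + y) \<le> max (absF x) (absF y)"
  using N unfolding nonarch_local_field_def by blast
lemma abs_zero[simp]: "absF 0 = 0" by simp
lemma abs_pos: "x \<noteq> 0 \<Longrightarrow> 0 < absF x"
  using abs_nonneg[of x] abs_zero_iff[of x] by linarith
lemma abs_one[simp]: "absF 1 = 1"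
proof -
  have "absF 1 = absF 1 * absF 1" using abs_mult[of 1 1] by simp
  moreover have "absF 1 \<noteq> 0" by simp
  ultimately show ?thesis by (metis mult_cancel_left2)
qed
lemma abs_minus_one[simp]: "absF (-1) = 1"
proof -
  have "absF ((-1) * (-1)) = absF (-1) * absF (-1)" by (rule abs_mult)
  moreover have "(-1::'a) * (-1) = 1" by simp
  ultimately have "absF (-1) * absF (-1) = 1" by (metis abs_one)
  then have "absF (-1) ^ 2 = 1 ^ 2" by (simp add: power2_eq_square)
  then show ?thesis using power2_eq_iff_nonneg[of "absF (-1)" 1] by simp
qed
lemma abs_uminus[simp]: "absF (- x) = absF x"
  using abs_mult[of "-1" x] by simp
lemma abs_diff_commute: "absF (x - y) = absF (y - x)"
  by (metis abs_uminus minus_diff_eq)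
lemma abs_inverse: "absF (inverse x) = inverse (absF x)"
proof (cases "x = 0")
  case False
  then have "absF x * absF (inverse x) = 1" by (metis abs_mult right_inverse abs_one)
  then show ?thesis by (metis inverse_unique)
qed simp
lemma abs_divide: "absF (x / y) = absF x / absF y"
  by (simp add: divide_inverse abs_mult abs_inverse)
lemma abs_power: "absF (x ^ n) = absF x ^ n"
  by (induction n) (auto simp: abs_mult)
lemma abs_ultra_diff: "absF (x - y) \<le> max (absF x) (absF y)"
  using abs_ultra[of x "-y"] by simp
lemma abs_ultra_le: "absF x \<le> e \<Longrightarrow> absF y \<le> e \<Longrightarrow> absF (x + y) \<le> e"
  using abs_ultra[of x y] by linarith
lemma abs_ultra_less: "absF x < e \<Longrightarrow> absF y < e \<Longrightarrow> absF (x + y) < e"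
  using abs_ultra[of x y] by linarith
lemma abs_ultra_diff_le: "absF x \<le> e \<Longrightarrow> absF y \<le> e \<Longrightarrow> absF (x - y) \<le> e"
  using abs_ultra_diff[of x y] by linarith
lemma abs_ultra_diff_less: "absF x < e \<Longrightarrow> absF y < e \<Longrightarrow> absF (x - y) < e"
  using abs_ultra_diff[of x y] by linarith
lemma abs_triangle: "absF (x + y) \<le> absF x + absF y"
  using abs_ultra[of x y] abs_nonneg[of x] abs_nonneg[of y] by linarith
lemma abs_isosceles: "absF y < absF x \<Longrightarrow> absF (x + y) = absF x"
proof -
  assume a: "absF y < absF x"
  have "absF (x + y) \<le> absF x" using abs_ultra[of x y] a by linarith
  moreover have "absF x \<le> max (absF (x+y)) (absF y)" using abs_ultra[of "x+y" "-y"] by simp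
  ultimately show ?thesis using a by linarith
qed
lemma abs_isosceles_diff: "absF (x - y) < absF x \<Longrightarrow> absF y = absF x"
  using abs_isosceles[of "y - x" x] by (simp add: abs_diff_commute)

definition q :: real where "q = real (card (residue_field_F absF))"
definition p :: 'a where
  "p = (SOME p. 0 < absF p \<and> absF p < 1 \<and> (\<forall>x. absF x < 1 \<longrightarrow> absF x \<le> absF p) \<and>
          absF p = 1 / q)"
lemma p_props: "0 < absF p" "absF p < 1" "\<And>x. absF x < 1 \<Longrightarrow> absF x \<le> absF p" "absF p = 1 / q"
proof -
  have "\<exists>p. 0 < absF p \<and> absF p < 1 \<and> (\<forall>x. absF x < 1 \<longrightarrow> absF x \<le> absF p) \<and> absF p = 1 / q"
    using N unfolding nonarch_local_field_def q_def by blast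
  from someI_ex[OF this] show "0 < absF p" "absF p < 1" "\<And>x. absF x < 1 \<Longrightarrow> absF x \<le> absF p" "absF p = 1 / q"
    unfolding p_def by blast+
qed
lemma p_nz[simp]: "p \<noteq> 0" using p_props(1) by (metis abs_zero_iff less_irrefl)
lemma q_pos: "0 < q" using p_props(1) p_props(4) by (simp add: zero_less_divide_1_iff)


definition mk :: "'a \<Rightarrow> 'a \<Rightarrow> 'a \<Rightarrow> 'a \<Rightarrow> 'a mat2" where
  "mk a b c d = (\<chi> i j. if i = 1 then (if j = 1 then a else b) else (if j = 1 then c else d))"

lemma two_ne_one[simp]: "(2::2) \<noteq> 1" "(1::2) \<noteq> 2" by simp_all

lemma mk_nth[simp]: "mk a b c d $ 1 $ 1 = a" "mk a b c d $ 1 $ 2 = b"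
  "mk a b c d $ 2 $ 1 = c" "mk a b c d $ 2 $ 2 = d"
  by (simp_all add: mk_def)

lemma mat_eq_iff: "(M::'a mat2) = N \<longleftrightarrow> M$1$1 = N$1$1 \<and> M$1$2 = N$1$2 \<and> M$2$1 = N$2$1 \<and> M$2$2 = N$2$2"
  by (simp add: vec_eq_iff forall_2)

lemma mat_mk: "(M::'a mat2) = mk (M$1$1) (M$1$2) (M$2$1) (M$2$2)"
  by (simp add: mat_eq_iff)

lemma mult_nth: "((A::'a mat2) ** B) $ i $ j = A$i$1 * B$1$j + A$i$2 * B$2$j"
  by (simp add: matrix_matrix_mult_def sum_2)

lemma mk_mult: "mk a b c d ** mk a' b' c' d' = mk (a*a' + b*c') (a*b' + b*d') (c*a' + d*c') (c*b' + d*d')"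
  by (simp add: mat_eq_iff mult_nth)

lemma det_mk: "det (mk a b c d) = a * d - b * c"
  by (simp add: det_2)

lemma det_nth: "det (M::'a mat2) = M$1$1 * M$2$2 - M$1$2 * M$2$1"
  by (simp add: det_2)

lemma zero_mat_iff: "(M::'a mat2) = 0 \<longleftrightarrow> M$1$1 = 0 \<and> M$1$2 = 0 \<and> M$2$1 = 0 \<and> M$2$2 = 0"
  by (simp add: mat_eq_iff)

lemma one_mat: "(mat 1 :: 'a mat2) = mk 1 0 0 1"
  by (simp add: mat_eq_iff mat_def)

lemma dist_set: "{absF (M $ i $ j - N $ i $ j) | i j. True} = (\<lambda>(i,j). absF (M $ i $ j - N $ i $ j)) ` UNIV"
  by auto

lemma dist_set_fin: "finite {absF (M $ i $ j - N $ i $ j) | i j. True}"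
  unfolding dist_set by simp

lemma dist_set_ne: "{absF (M $ i $ j - N $ i $ j) | i j. True} \<noteq> {}"
  by auto

lemma entry_le_dist: "absF (M $ i $ j - N $ i $ j) \<le> mat_dist absF M N"
  unfolding mat_dist_def by (rule Max_ge[OF dist_set_fin]) auto

lemma dist_le: "(\<And>i j. absF (M $ i $ j - N $ i $ j) \<le> e) \<Longrightarrow> mat_dist absF M N \<le> e"
  unfolding mat_dist_def using Max_le_iff[OF dist_set_fin[of M N] dist_set_ne[of M N]] by auto

lemma dist_less: "(\<And>i j. absF (M $ i $ j - N $ i $ j) < e) \<Longrightarrow> mat_dist absF M N < e"
  unfolding mat_dist_def using Max_less_iff[OF dist_set_fin[of M N] dist_set_ne[of M N]] by auto

lemma dist_less_entry: "mat_dist absF M N < e \<Longrightarrow> absF (M $ i $ j - N $ i $ j) < e"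
  using entry_le_dist[of M i j N] by linarith

lemma dist_le_entry: "mat_dist absF M N \<le> e \<Longrightarrow> absF (M $ i $ j - N $ i $ j) \<le> e"
  using entry_le_dist[of M i j N] by linarith

lemma dist_nonneg: "0 \<le> mat_dist absF M N"
  using entry_le_dist[of M 1 1 N] abs_nonneg[of "M $ 1 $ 1 - N $ 1 $ 1"] by linarith

lemma dist_commute: "mat_dist absF M N = mat_dist absF N M"
  by (intro antisym dist_le) (metis abs_diff_commute entry_le_dist)+

lemma dist_zero: "mat_dist absF M N = 0 \<longleftrightarrow> M = N"
proof
  assume "mat_dist absF M N = 0"
  then have "\<And>i j. absF (M $ i $ j - N $ i $ j) = 0"
    by (metis antisym abs_nonneg entry_le_dist)
  then show "M = N" by (simp add: vec_eq_iff)
next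
  assume "M = N"
  then show "mat_dist absF M N = 0"
    using dist_nonneg[of M N] dist_le[of M N 0] by simp
qed

lemma dist_triangle: "mat_dist absF M P \<le> mat_dist absF M N + mat_dist absF N P"
proof (rule dist_le)
  fix i j
  have "absF (M $ i $ j - P $ i $ j) \<le> absF (M $ i $ j - N $ i $ j) + absF (N $ i $ j - P $ i $ j)"
    using abs_triangle[of "M $ i $ j - N $ i $ j" "N $ i $ j - P $ i $ j"] by simp
  then show "absF (M $ i $ j - P $ i $ j) \<le> mat_dist absF M N + mat_dist absF N P"
    using entry_le_dist[of M i j N] entry_le_dist[of N i j P] by linarith
qed

sublocale MS: Metric_space UNIV "mat_dist absF"
  by unfold_locales (auto simp: dist_nonneg dist_commute dist_zero dist_triangle)

lemma mat_topology_eq: "mat_topology absF = MS.mtopology"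
  by (simp add: mat_topology_def)


definition inv2 :: "'a mat2 \<Rightarrow> 'a mat2" where
  "inv2 g = mk (g$2$2 / det g) (- g$1$2 / det g) (- g$2$1 / det g) (g$1$1 / det g)"

lemma inv2_left: "det g \<noteq> 0 \<Longrightarrow> inv2 g ** g = mat 1"
  unfolding one_mat inv2_def
  apply (simp add: mat_eq_iff mult_nth)
  apply (simp_all add: field_simps)
  apply (simp_all add: det_nth algebra_simps)
  done

lemma inv2_right: "det g \<noteq> 0 \<Longrightarrow> g ** inv2 g = mat 1"
  unfolding one_mat inv2_def
  apply (simp add: mat_eq_iff mult_nth)
  apply (simp_all add: field_simps)
  apply (simp_all add: det_nth algebra_simps)
  done

lemma det_inv2: "det g \<noteq> 0 \<Longrightarrow> det (inv2 g) \<noteq> 0"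
  using inv2_left[of g] det_mul[of "inv2 g" g] det_I[where 'a='a and 'n=2] by auto

lemma inv2_cancel: "det g \<noteq> 0 \<Longrightarrow> inv2 g ** (g ** M) = M"
  by (simp add: matrix_mul_assoc inv2_left)

lemma inv2_cancel': "det g \<noteq> 0 \<Longrightarrow> g ** (inv2 g ** M) = M"
  by (simp add: matrix_mul_assoc inv2_right)

lemma O1_mult: fixes g M :: "'a mat2" shows "det g \<noteq> 0 \<Longrightarrow> g ** M \<in> O1 \<longleftrightarrow> M \<in> O1"
proof
  assume g: "det g \<noteq> 0"
  show "M \<in> O1" if "g ** M \<in> O1"
  proof -
    have "det M = 0" using that g by (simp add: O1_def det_mul)
    moreover have "M \<noteq> 0" using that by (auto simp: O1_def)
    ultimately show ?thesis by (simp add: O1_def)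
  qed
  show "g ** M \<in> O1" if "M \<in> O1"
  proof -
    have "det (g ** M) = 0" using that by (simp add: O1_def det_mul)
    moreover have "g ** M \<noteq> 0"
    proof
      assume "g ** M = 0"
      then have "inv2 g ** (g ** M) = 0" by simp
      then show False using inv2_cancel[OF g, of M] that by (simp add: O1_def)
    qed
    ultimately show ?thesis by (simp add: O1_def)
  qed
qed

definition Cb :: "'a mat2 \<Rightarrow> real" where
  "Cb g = absF (g$1$1) + absF (g$1$2) + absF (g$2$1) + absF (g$2$2) + 1"

lemma Cb_pos: "0 < Cb g"
  unfolding Cb_def using abs_nonneg[of "g$1$1"] abs_nonneg[of "g$1$2"] abs_nonneg[of "g$2$1"]
    abs_nonneg[of "g$2$2"] by linarith

lemma Cb_ge: "absF (g $ i $ j) \<le> Cb g"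
proof -
  have "i = 1 \<or> i = 2" "j = 1 \<or> j = 2" using exhaust_2 by auto
  then show ?thesis unfolding Cb_def
    using abs_nonneg[of "g$1$1"] abs_nonneg[of "g$1$2"] abs_nonneg[of "g$2$1"]
    abs_nonneg[of "g$2$2"] by auto
qed

lemma dist_mult_le: "mat_dist absF (g ** M) (g ** N) \<le> Cb g * mat_dist absF M N"
proof (rule dist_le)
  fix i j
  let ?d = "mat_dist absF M N"
  have e: "(g ** M) $ i $ j - (g ** N) $ i $ j = g$i$1 * (M$1$j - N$1$j) + g$i$2 * (M$2$j - N$2$j)"
    by (simp add: mult_nth algebra_simps)
  have 1: "absF (g$i$1 * (M$1$j - N$1$j)) \<le> Cb g * ?d"
    unfolding abs_mult by (intro mult_mono Cb_ge entry_le_dist) (auto simp: less_imp_le[OF Cb_pos])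
  have 2: "absF (g$i$2 * (M$2$j - N$2$j)) \<le> Cb g * ?d"
    unfolding abs_mult by (intro mult_mono Cb_ge entry_le_dist) (auto simp: less_imp_le[OF Cb_pos])
  show "absF ((g ** M) $ i $ j - (g ** N) $ i $ j) \<le> Cb g * ?d"
    unfolding e using abs_ultra_le[OF 1 2] .
qed

lemma dist_mult_less:
  assumes "mat_dist absF M N < r / Cb g" shows "mat_dist absF (g ** M) (g ** N) < r"
proof -
  have "Cb g * mat_dist absF M N < r" using assms Cb_pos[of g] by (simp add: field_simps)
  then show ?thesis using dist_mult_le[of g M N] by linarith
qed

lemma cont_mult: fixes g :: "'a mat2" shows "continuous_map MS.mtopology MS.mtopology (\<lambda>M. g ** M)"
proof -
  have "\<exists>\<delta>>0. \<forall>x. mat_dist absF a x < \<delta> \<longrightarrow> mat_dist absF (g ** a) (g ** x) < e" if "e > 0" for a e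
    using that Cb_pos[of g] dist_mult_less[of a _ e g] by (intro exI[of _ "e / Cb g"]) auto
  then show ?thesis
    by (subst MS.metric_continuous_map[OF MS.Metric_space_axioms]) auto
qed

section \<open>The Schwartz space\<close>

abbreviation S where "S \<equiv> S_O1 absF"

lemma S_vanish: "f \<in> S \<Longrightarrow> M \<notin> O1 \<Longrightarrow> f M = 0"
  unfolding S_O1_def by blast

lemma S_lc: "f \<in> S \<Longrightarrow> M \<in> O1 \<Longrightarrow> \<exists>r>0. \<forall>N\<in>O1. mat_dist absF M N < r \<longrightarrow> f N = f M"
  unfolding S_O1_def by blast

lemma S_cpt: "f \<in> S \<Longrightarrow> \<exists>K. compactin MS.mtopology K \<and> K \<subseteq> O1 \<and> {M \<in> O1. f M \<noteq> 0} \<subseteq> K"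
  unfolding S_O1_def mat_topology_eq compactin_subtopology by blast

lemma S_intro:
  assumes "\<And>M. M \<notin> O1 \<Longrightarrow> f M = 0"
    "\<And>M. M \<in> O1 \<Longrightarrow> \<exists>r>0. \<forall>N\<in>O1. mat_dist absF M N < r \<longrightarrow> f N = f M"
    "compactin MS.mtopology K" "K \<subseteq> O1" "{M \<in> O1. f M \<noteq> 0} \<subseteq> K"
  shows "f \<in> S"
  unfolding S_O1_def mat_topology_eq compactin_subtopology using assms by blast

lemma S_comp:
  assumes f: "f \<in> S" and g: "det g \<noteq> 0"
  shows "(\<lambda>M. f (g ** M)) \<in> S"
proof -
  obtain K where K: "compactin MS.mtopology K" "K \<subseteq> O1" "{M \<in> O1. f M \<noteq> 0} \<subseteq> K"
    using S_cpt[OF f] by blast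
  show ?thesis
  proof (rule S_intro[where K = "(\<lambda>M. inv2 g ** M) ` K"])
    fix M :: "'a mat2" assume "M \<notin> O1"
    then show "f (g ** M) = 0" using S_vanish[OF f] O1_mult[OF g] by blast
  next
    fix M :: "'a mat2" assume M: "M \<in> O1"
    then have "g ** M \<in> O1" using O1_mult[OF g] by blast
    then obtain r where r: "r > 0" "\<forall>N\<in>O1. mat_dist absF (g ** M) N < r \<longrightarrow> f N = f (g ** M)"
      using S_lc[OF f] by blast
    show "\<exists>r>0. \<forall>N\<in>O1. mat_dist absF M N < r \<longrightarrow> f (g ** N) = f (g ** M)"
      using r Cb_pos[of g] dist_mult_less[of M _ r g] O1_mult[OF g]
      by (intro exI[of _ "r / Cb g"]) auto
  next
    show "compactin MS.mtopology ((\<lambda>M. inv2 g ** M) ` K)"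
      using image_compactin[OF K(1) cont_mult] .
  next
    show "(\<lambda>M. inv2 g ** M) ` K \<subseteq> O1" using K(2) O1_mult[OF det_inv2[OF g]] by blast
  next
    show "{M \<in> O1. f (g ** M) \<noteq> 0} \<subseteq> (\<lambda>M. inv2 g ** M) ` K"
    proof
      fix M :: "'a mat2" assume "M \<in> {M \<in> O1. f (g ** M) \<noteq> 0}"
      then have "g ** M \<in> K" using K(3) O1_mult[OF g] by blast
      then show "M \<in> (\<lambda>M. inv2 g ** M) ` K" using inv2_cancel[OF g, of M] by (metis image_eqI)
    qed
  qed
qed

lemma S_zero: "(\<lambda>M. 0) \<in> S"
  by (rule S_intro[where K = "{}"]) (auto intro: exI[of _ 1])

lemma S_mult_lc:
  assumes f: "f \<in> S" and h: "\<And>M. M \<in> O1 \<Longrightarrow> \<exists>r>0. \<forall>N\<in>O1. mat_dist absF M N < r \<longrightarrow> h N = h M"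
  shows "(\<lambda>M. f M * h M) \<in> S"
proof -
  obtain K where K: "compactin MS.mtopology K" "K \<subseteq> O1" "{M \<in> O1. f M \<noteq> 0} \<subseteq> K"
    using S_cpt[OF f] by blast
  show ?thesis
  proof (rule S_intro[OF _ _ K(1,2)])
    fix M :: "'a mat2" assume M: "M \<in> O1"
    obtain r1 where r1: "r1 > 0" "\<forall>N\<in>O1. mat_dist absF M N < r1 \<longrightarrow> f N = f M"
      using S_lc[OF f M] by blast
    obtain r2 where r2: "r2 > 0" "\<forall>N\<in>O1. mat_dist absF M N < r2 \<longrightarrow> h N = h M"
      using h[OF M] by blast
    show "\<exists>r>0. \<forall>N\<in>O1. mat_dist absF M N < r \<longrightarrow> f N * h N = f M * h M"
      using r1 r2 by (intro exI[of _ "min r1 r2"]) auto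
  qed (use K(3) S_vanish[OF f] in auto)
qed

lemma S_scale: assumes "f \<in> S" shows "(\<lambda>M. c * f M) \<in> S"
proof -
  have "(\<lambda>M. f M * c) \<in> S" by (rule S_mult_lc[OF assms]) (auto intro!: exI[of _ 1])
  then show ?thesis by (simp add: mult.commute)
qed

lemma S_add:
  assumes f: "f \<in> S" and h: "h \<in> S"
  shows "(\<lambda>M. f M + h M) \<in> S"
proof -
  obtain K where K: "compactin MS.mtopology K" "K \<subseteq> O1" "{M \<in> O1. f M \<noteq> 0} \<subseteq> K"
    using S_cpt[OF f] by blast
  obtain K' where K': "compactin MS.mtopology K'" "K' \<subseteq> O1" "{M \<in> O1. h M \<noteq> 0} \<subseteq> K'"
    using S_cpt[OF h] by blast
  show ?thesis
  proof (rule S_intro[where K = "K \<union> K'"])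
    fix M :: "'a mat2" assume M: "M \<in> O1"
    obtain r1 where r1: "r1 > 0" "\<forall>N\<in>O1. mat_dist absF M N < r1 \<longrightarrow> f N = f M"
      using S_lc[OF f M] by blast
    obtain r2 where r2: "r2 > 0" "\<forall>N\<in>O1. mat_dist absF M N < r2 \<longrightarrow> h N = h M"
      using S_lc[OF h M] by blast
    show "\<exists>r>0. \<forall>N\<in>O1. mat_dist absF M N < r \<longrightarrow> f N + h N = f M + h M"
      using r1 r2 by (intro exI[of _ "min r1 r2"]) auto
  next
    fix M :: "'a mat2" assume "M \<notin> O1"
    then show "f M + h M = 0" using S_vanish[OF f] S_vanish[OF h] by simp
  next
    show "compactin MS.mtopology (K \<union> K')" using K(1) K'(1) by (rule compactin_Un)
  next
    show "K \<union> K' \<subseteq> O1" using K(2) K'(2) by blast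
  next
    show "{M \<in> O1. f M + h M \<noteq> 0} \<subseteq> K \<union> K'"
    proof
      fix M assume M: "M \<in> {M \<in> O1. f M + h M \<noteq> 0}"
      then have "f M \<noteq> 0 \<or> h M \<noteq> 0" by auto
      then show "M \<in> K \<union> K'" using M K(3) K'(3) by blast
    qed
  qed
qed

lemma S_sum: "finite I \<Longrightarrow> (\<And>i. i \<in> I \<Longrightarrow> F i \<in> S) \<Longrightarrow> (\<lambda>M. \<Sum>i\<in>I. F i M) \<in> S"
proof (induction I rule: finite_induct)
  case empty then show ?case using S_zero by simp
next
  case (insert x I)
  then show ?case using S_add[of "F x" "\<lambda>M. \<Sum>i\<in>I. F i M"] by simp
qed


abbreviation Dl where "Dl \<equiv> S_dual absF"

lemma dual_add: "l \<in> Dl \<Longrightarrow> f \<in> S \<Longrightarrow> h \<in> S \<Longrightarrow> l (\<lambda>M. f M + h M) = l f + l h"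
  unfolding S_dual_def by blast
lemma dual_scale: "l \<in> Dl \<Longrightarrow> f \<in> S \<Longrightarrow> l (\<lambda>M. c * f M) = c * l f"
  unfolding S_dual_def by blast
lemma dual_out: "l \<in> Dl \<Longrightarrow> f \<notin> S \<Longrightarrow> l f = 0"
  unfolding S_dual_def by blast
lemma dual_zero: "l \<in> Dl \<Longrightarrow> l (\<lambda>M. 0) = 0"
  using dual_scale[of l "\<lambda>M. 0" 0] S_zero by simp
lemma dual_sum:
  assumes l: "l \<in> Dl"
  shows "finite I \<Longrightarrow> (\<And>i. i \<in> I \<Longrightarrow> F i \<in> S) \<Longrightarrow> l (\<lambda>M. \<Sum>i\<in>I. F i M) = (\<Sum>i\<in>I. l (F i))"
proof (induction I rule: finite_induct)
  case empty then show ?case using dual_zero[OF l] by simp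
next
  case (insert x I)
  have "l (\<lambda>M. \<Sum>i\<in>insert x I. F i M) = l (\<lambda>M. F x M + (\<Sum>i\<in>I. F i M))"
    using insert by simp
  also have "\<dots> = l (F x) + l (\<lambda>M. \<Sum>i\<in>I. F i M)"
    using dual_add[OF l, of "F x" "\<lambda>M. \<Sum>i\<in>I. F i M"] insert S_sum[of I F] by simp
  finally show ?case using insert by simp
qed

lemma dual_intro:
  assumes "\<And>f h. f \<in> S \<Longrightarrow> h \<in> S \<Longrightarrow> l (\<lambda>M. f M + h M) = l f + l h"
    "\<And>f c. f \<in> S \<Longrightarrow> l (\<lambda>M. c * f M) = c * l f" "\<And>f. f \<notin> S \<Longrightarrow> l f = 0"
  shows "l \<in> Dl"
  unfolding S_dual_def using assms by blast

abbreviation act' where "act' \<equiv> act absF"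
abbreviation amid where "amid \<equiv> act_minus_id absF"

lemma act_app: "f \<in> S \<Longrightarrow> act' g l f = complex_of_real (absF (det g)) * l (\<lambda>M. f (g ** M))"
  by (simp add: act_def)

lemma act_out: "f \<notin> S \<Longrightarrow> act' g l f = 0"
  by (simp add: act_def)

lemma act_comp:
  fixes g h :: "'a mat2"
  assumes "det g \<noteq> 0"
  shows "act' g (act' h l) = act' (g ** h) l"
proof
  fix f
  show "act' g (act' h l) f = act' (g ** h) l f"
  proof (cases "f \<in> S")
    case True
    then have "(\<lambda>M. f (g ** M)) \<in> S" using S_comp assms by blast
    then show ?thesis using True
      by (simp add: act_def det_mul abs_mult matrix_mul_assoc)
  qed (simp add: act_def)
qed

lemma act_in_dual:
  assumes l: "l \<in> Dl" and g: "det g \<noteq> 0"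
  shows "act' g l \<in> Dl"
proof (rule dual_intro)
  fix f h assume f: "f \<in> S" and h: "h \<in> S"
  then show "act' g l (\<lambda>M. f M + h M) = act' g l f + act' g l h"
    using S_add[OF f h] dual_add[OF l S_comp[OF f g] S_comp[OF h g]]
    by (simp add: act_def distrib_left)
next
  fix f c assume f: "f \<in> S"
  then show "act' g l (\<lambda>M. c * f M) = c * act' g l f"
    using S_scale[OF f] dual_scale[OF l S_comp[OF f g]] by (simp add: act_def)
qed (simp add: act_def)

lemma amid_in_dual:
  assumes l: "l \<in> Dl" and g: "det g \<noteq> 0"
  shows "amid g l \<in> Dl"
proof (rule dual_intro)
  fix f h assume f: "f \<in> S" and h: "h \<in> S"
  then show "amid g l (\<lambda>M. f M + h M) = amid g l f + amid g l h"
    using dual_add[OF act_in_dual[OF l g] f h] dual_add[OF l f h]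
    by (simp add: act_minus_id_def)
next
  fix f c assume f: "f \<in> S"
  then show "amid g l (\<lambda>M. c * f M) = c * amid g l f"
    using dual_scale[OF act_in_dual[OF l g] f] dual_scale[OF l f] by (simp add: act_minus_id_def algebra_simps)
qed (simp add: act_minus_id_def act_def dual_out[OF l])

lemma act_plus: "act' g (\<lambda>f. a f + b f) = (\<lambda>f. act' g a f + act' g b f)"
  by (rule ext) (simp add: act_def distrib_left)

lemma act_one: "l \<in> Dl \<Longrightarrow> act' (mat 1) l = l"
  by (rule ext) (simp add: act_def det_I dual_out)

section \<open>The cocycle\<close>

lemma phi_mult:
  fixes g h :: "'a mat2"
  assumes g: "det g \<noteq> 0" and inv: "act' g (amid h l) = amid h l"
  shows "amid (g ** h) l = (\<lambda>f. amid g l f + amid h l f)"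
proof -
  have a: "act' h l = (\<lambda>f. amid h l f + l f)" by (rule ext) (simp add: act_minus_id_def)
  have "act' (g ** h) l = act' g (act' h l)" using act_comp[OF g] by simp
  also have "\<dots> = (\<lambda>f. amid h l f + act' g l f)" unfolding a act_plus inv ..
  finally show ?thesis by (simp add: act_minus_id_def fun_eq_iff)
qed

lemma phi_one: "l \<in> Dl \<Longrightarrow> amid (mat 1) l = (\<lambda>f. 0)"
  by (simp add: act_minus_id_def act_one)


definition U :: "'a \<Rightarrow> 'a mat2" where "U x = mk 1 x 0 1"
definition V :: "'a \<Rightarrow> 'a mat2" where "V y = mk 1 0 y 1"
definition Dg :: "'a \<Rightarrow> 'a mat2" where "Dg t = mk 1 0 0 t"
definition Wm :: "'a mat2" where "Wm = mk 0 1 1 0"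

lemma det_U[simp]: "det (U x) = 1" by (simp add: U_def det_mk)
lemma det_V[simp]: "det (V x) = 1" by (simp add: V_def det_mk)
lemma det_Dg[simp]: "det (Dg x) = x" by (simp add: Dg_def det_mk)
lemma det_Wm[simp]: "det Wm = -1" by (simp add: Wm_def det_mk)

lemma abs_one_le: "0 < absF t \<Longrightarrow> absF t \<le> 1 \<Longrightarrow> \<exists>n. absF t = absF p ^ n"
proof -
  assume t: "0 < absF t" "absF t \<le> 1"
  obtain N where "absF p ^ N < absF t" using real_arch_pow_inv[OF t(1) p_props(2)] by blast
  then show ?thesis using t
  proof (induction N arbitrary: t)
    case 0 then show ?case by simp
  next
    case (Suc N)
    show ?case
    proof (cases "absF t = 1")
      case True then show ?thesis by (intro exI[of _ 0]) simp
    next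
      case False
      then have "absF t < 1" using Suc.prems by simp
      then have tp: "absF t \<le> absF p" using p_props(3) by blast
      have tpe: "absF (t / p) = absF t / absF p" by (simp add: abs_divide)
      then have 1: "absF (t / p) \<le> 1" "0 < absF (t / p)" using tp p_props(1) Suc.prems
        by (simp_all add: divide_le_eq_1)
      have "absF p ^ N < absF (t / p)"
        using Suc.prems(1) p_props(1) by (simp add: tpe pos_less_divide_eq mult.commute)
      then obtain n where "absF (t / p) = absF p ^ n" using Suc.IH 1 by blast
      then have "absF t = absF p ^ Suc n" using tpe p_props(1) by (simp add: field_simps)
      then show ?thesis by blast
    qed
  qed
qed


section \<open>Residue classes\<close>

abbreviation Oint where "Oint \<equiv> integers_F absF"

lemma Oint_iff: "x \<in> Oint \<longleftrightarrow> absF x \<le> 1" by (simp add: integers_F_def)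

definition Er :: "real \<Rightarrow> ('a \<times> 'a) set" where
  "Er e = {(x, y). x \<in> Oint \<and> y \<in> Oint \<and> absF (x - y) \<le> e}"

lemma equiv_Er: "0 \<le> e \<Longrightarrow> equiv Oint (Er e)"
proof (rule equivI)
  assume e: "0 \<le> e"
  show "Er e \<subseteq> Oint \<times> Oint" by (auto simp: Er_def)
  show "refl_on Oint (Er e)" using e by (auto simp: Er_def refl_on_def)
  show "sym (Er e)" by (auto simp: Er_def sym_def abs_diff_commute)
  show "trans (Er e)"
  proof (rule transI)
    fix x y z assume "(x, y) \<in> Er e" "(y, z) \<in> Er e"
    then show "(x, z) \<in> Er e" using abs_ultra_le[of "x - y" e "y - z"] by (auto simp: Er_def)
  qed
qed

lemma class_close:
  assumes e: "0 \<le> e" and X: "X \<in> Oint // Er e" and "x \<in> X" "y \<in> X"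
  shows "absF (x - y) \<le> e"
  using in_quotient_imp_in_rel[OF equiv_Er[OF e] X, of x y] assms by (auto simp: Er_def)

lemma class_sub: "0 \<le> e \<Longrightarrow> X \<in> Oint // Er e \<Longrightarrow> X \<subseteq> Oint"
  using in_quotient_imp_subset equiv_Er by blast

lemma class_closed:
  assumes e: "0 \<le> e" "e \<le> 1" and X: "X \<in> Oint // Er e" and x: "x \<in> X" and y: "absF (y - x) \<le> e"
  shows "y \<in> X"
proof -
  obtain a where a: "X = Er e `` {a}" "a \<in> Oint" using X by (rule quotientE)
  have "x \<in> Oint" using class_sub[OF e(1) X] x by blast
  then have "absF y \<le> 1" using abs_ultra_le[of "y - x" 1 x] y e(2) by (simp add: Oint_iff)
  moreover have "absF (a - y) \<le> e" using x a abs_ultra_le[of "a - x" e "x - y"] y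
    by (auto simp: Er_def abs_diff_commute)
  ultimately show ?thesis using a by (auto simp: Er_def Oint_iff)
qed

lemma class_exists: "0 \<le> e \<Longrightarrow> x \<in> Oint \<Longrightarrow> Er e `` {x} \<in> Oint // Er e \<and> x \<in> Er e `` {x}"
  using quotientI equiv_class_self equiv_Er by metis

lemma class_unique:
  assumes e: "0 \<le> e" and "X \<in> Oint // Er e" "Y \<in> Oint // Er e" "x \<in> X" "x \<in> Y"
  shows "X = Y"
  using quotient_disj[OF equiv_Er[OF e]] assms by blast

lemma Er_p: "residue_field_F absF = Oint // Er (absF p)"
proof -
  have "{(x, y). x \<in> Oint \<and> y \<in> Oint \<and> absF (x - y) < 1} = Er (absF p)"
    using p_props(2,3) by (force simp: Er_def)
  then show ?thesis by (simp add: residue_field_F_def)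
qed

definition rep :: "'a set \<Rightarrow> 'a" where "rep X = (SOME x. x \<in> X)"

lemma rep_in: "0 \<le> e \<Longrightarrow> X \<in> Oint // Er e \<Longrightarrow> rep X \<in> X"
  unfolding rep_def using in_quotient_imp_non_empty[OF equiv_Er] by (metis ex_in_conv someI)

definition R :: "'a set" where "R = rep ` (Oint // Er (absF p))"

lemma R_props:
  shows "finite R" "R \<subseteq> Oint" "real (card R) = q"
    "\<And>x. x \<in> Oint \<Longrightarrow> \<exists>r\<in>R. absF (x - r) \<le> absF p"
    "\<And>r r'. r \<in> R \<Longrightarrow> r' \<in> R \<Longrightarrow> absF (r - r') \<le> absF p \<Longrightarrow> r = r'"
proof -
  have e: "0 \<le> absF p" by simp
  have fin: "finite (Oint // Er (absF p))"
    using N Er_p unfolding nonarch_local_field_def by simp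
  then show "finite R" unfolding R_def by simp
  show "R \<subseteq> Oint" unfolding R_def using rep_in[OF e] class_sub[OF e] by blast
  have inj: "inj_on rep (Oint // Er (absF p))"
  proof
    fix X Y assume X: "X \<in> Oint // Er (absF p)" and Y: "Y \<in> Oint // Er (absF p)" and "rep X = rep Y"
    then show "X = Y" using rep_in[OF e X] rep_in[OF e Y] class_unique[OF e X Y] by metis
  qed
  show "real (card R) = q" unfolding R_def q_def Er_p card_image[OF inj] ..
  show "\<exists>r\<in>R. absF (x - r) \<le> absF p" if x: "x \<in> Oint" for x
  proof -
    let ?X = "Er (absF p) `` {x}"
    have X: "?X \<in> Oint // Er (absF p)" "x \<in> ?X" using class_exists[OF e x] by auto
    then have "absF (x - rep ?X) \<le> absF p" using class_close[OF e X(1)] rep_in[OF e X(1)] by blast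
    then show ?thesis using X unfolding R_def by blast
  qed
  show "r = r'" if r: "r \<in> R" and r': "r' \<in> R" and d: "absF (r - r') \<le> absF p" for r r'
  proof -
    obtain X where X: "X \<in> Oint // Er (absF p)" "r = rep X" using r unfolding R_def by blast
    obtain Y where Y: "Y \<in> Oint // Er (absF p)" "r' = rep Y" using r' unfolding R_def by blast
    have "r' \<in> X" using class_closed[OF e _ X(1) rep_in[OF e X(1)]] d p_props(2) X(2)
      by (simp add: abs_diff_commute)
    then have "X = Y" using class_unique[OF e X(1) Y(1) _ rep_in[OF e Y(1)]] Y(2) by blast
    then show ?thesis using X Y by simp
  qed
qed

lemma finite_classes: "finite (Oint // Er (absF p ^ m))"
proof -
  have "\<exists>D. finite D \<and> D \<subseteq> Oint \<and> (\<forall>x\<in>Oint. \<exists>d\<in>D. absF (x - d) \<le> absF p ^ m)"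
  proof (induction m)
    case 0
    have "\<forall>x\<in>Oint. absF (x - 0) \<le> absF p ^ 0" by (simp add: Oint_iff)
    then show ?case by (intro exI[of _ "{0}"]) (auto simp: Oint_iff)
  next
    case (Suc m)
    then obtain D where D: "finite D" "D \<subseteq> Oint" "\<forall>x\<in>Oint. \<exists>d\<in>D. absF (x - d) \<le> absF p ^ m" by blast
    let ?D = "(\<lambda>(r, d). r + p * d) ` (R \<times> D)"
    have "finite ?D" using D(1) R_props(1) by simp
    moreover have "?D \<subseteq> Oint"
    proof
      fix z assume "z \<in> ?D"
      then obtain r d where "r \<in> R" "d \<in> D" "z = r + p * d" by auto
      moreover have "absF r \<le> 1" "absF d \<le> 1" using \<open>r \<in> R\<close> \<open>d \<in> D\<close> R_props(2) D(2) by (auto simp: Oint_iff)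
      moreover have "absF p * absF d \<le> 1" using calculation(5) p_props(1,2) by (simp add: mult_le_one)
      ultimately show "z \<in> Oint" using abs_ultra_le[of r 1 "p * d"] by (simp add: Oint_iff abs_mult)
    qed
    moreover have "\<forall>x\<in>Oint. \<exists>z\<in>?D. absF (x - z) \<le> absF p ^ Suc m"
    proof
      fix x assume x: "x \<in> Oint"
      obtain r where r: "r \<in> R" "absF (x - r) \<le> absF p" using R_props(4)[OF x] by blast
      let ?y = "(x - r) / p"
      have "absF ?y \<le> 1" using r(2) p_props(1) by (simp add: abs_divide)
      then have "?y \<in> Oint" by (simp add: Oint_iff)
      then obtain d where d: "d \<in> D" "absF (?y - d) \<le> absF p ^ m" using D(3) by blast
      have "x - (r + p * d) = p * (?y - d)" by (simp add: field_simps)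
      then have "absF (x - (r + p * d)) \<le> absF p ^ Suc m"
        using d(2) p_props(1) by (simp add: abs_mult)
      moreover have "r + p * d \<in> ?D" using r(1) d(1) by force
      ultimately show "\<exists>z\<in>?D. absF (x - z) \<le> absF p ^ Suc m" by blast
    qed
    ultimately show ?case by blast
  qed
  then obtain D where D: "finite D" "D \<subseteq> Oint" "\<forall>x\<in>Oint. \<exists>d\<in>D. absF (x - d) \<le> absF p ^ m" by blast
  have e: "0 \<le> absF p ^ m" by simp
  have "Oint // Er (absF p ^ m) \<subseteq> (\<lambda>d. Er (absF p ^ m) `` {d}) ` D"
  proof
    fix X assume X: "X \<in> Oint // Er (absF p ^ m)"
    then obtain x where x: "X = Er (absF p ^ m) `` {x}" "x \<in> Oint" by (rule quotientE)
    obtain d where d: "d \<in> D" "absF (x - d) \<le> absF p ^ m" using D(3) x(2) by blast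
    have "(x, d) \<in> Er (absF p ^ m)" using d D(2) x(2) by (auto simp: Er_def)
    then have "X = Er (absF p ^ m) `` {d}" using x equiv_class_eq_iff[OF equiv_Er[OF e]] by metis
    then show "X \<in> (\<lambda>d. Er (absF p ^ m) `` {d}) ` D" using d(1) by blast
  qed
  then show ?thesis using D(1) finite_subset by blast
qed


section \<open>The coordinate lambda\<close>

definition Aset :: "'a mat2 \<Rightarrow> bool" where
  "Aset N \<longleftrightarrow> N \<in> O1 \<and> (N$1$1 \<noteq> 0 \<or> N$1$2 \<noteq> 0)"

definition lam :: "'a mat2 \<Rightarrow> 'a" where
  "lam N = (if N$1$1 \<noteq> 0 then N$2$1 / N$1$1 else N$2$2 / N$1$2)"

lemma lam_prop: "Aset N \<Longrightarrow> N$2$1 = lam N * N$1$1 \<and> N$2$2 = lam N * N$1$2"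
proof -
  assume a: "Aset N"
  then have d: "N$1$1 * N$2$2 = N$1$2 * N$2$1" by (simp add: Aset_def O1_def det_nth)
  show ?thesis
  proof (cases "N$1$1 = 0")
    case True
    then have "N$1$2 \<noteq> 0" using a by (simp add: Aset_def)
    then show ?thesis using True d by (simp add: lam_def field_simps)
  next
    case False
    then show ?thesis using d by (simp add: lam_def field_simps)
  qed
qed

lemma lam_unique: "Aset N \<Longrightarrow> N$2$1 = m * N$1$1 \<Longrightarrow> N$2$2 = m * N$1$2 \<Longrightarrow> lam N = m"
  using lam_prop[of N] by (auto simp: Aset_def)

lemma V_mult: fixes N :: "'a mat2" shows "V c ** N = mk (N$1$1) (N$1$2) (c * N$1$1 + N$2$1) (c * N$1$2 + N$2$2)"
  by (simp add: V_def mat_eq_iff mult_nth)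
lemma U_mult: fixes N :: "'a mat2" shows "U c ** N = mk (N$1$1 + c * N$2$1) (N$1$2 + c * N$2$2) (N$2$1) (N$2$2)"
  by (simp add: U_def mat_eq_iff mult_nth)
lemma Dg_mult: fixes N :: "'a mat2" shows "Dg t ** N = mk (N$1$1) (N$1$2) (t * N$2$1) (t * N$2$2)"
  by (simp add: Dg_def mat_eq_iff mult_nth)
lemma Wm_mult: fixes N :: "'a mat2" shows "Wm ** N = mk (N$2$1) (N$2$2) (N$1$1) (N$1$2)"
  by (simp add: Wm_def mat_eq_iff mult_nth)
lemma VV: fixes N :: "'a mat2" shows "V c ** (V d ** N) = V (c + d) ** N"
  by (simp add: V_def mat_eq_iff mult_nth algebra_simps)
lemma WW: fixes N :: "'a mat2" shows "Wm ** (Wm ** N) = N"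
  by (simp add: Wm_def mat_eq_iff mult_nth)

lemma A_V: fixes N :: "'a mat2" shows "Aset (V c ** N) \<longleftrightarrow> Aset N"
  using O1_mult[of "V c" N] by (simp add: Aset_def V_mult)
lemma lam_V: fixes N :: "'a mat2" shows "Aset N \<Longrightarrow> lam (V c ** N) = lam N + c"
  using lam_prop[of N] A_V[of c N] by (intro lam_unique) (simp_all add: V_mult algebra_simps)
lemma A_D: fixes N :: "'a mat2" shows "t \<noteq> 0 \<Longrightarrow> Aset (Dg t ** N) \<longleftrightarrow> Aset N"
  using O1_mult[of "Dg t" N] by (simp add: Aset_def Dg_mult)
lemma lam_D: fixes N :: "'a mat2" shows "t \<noteq> 0 \<Longrightarrow> Aset N \<Longrightarrow> lam (Dg t ** N) = t * lam N"
  using lam_prop[of N] A_D[of t N] by (intro lam_unique) (simp_all add: Dg_mult algebra_simps)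

definition good :: "nat \<Rightarrow> ('a mat2 \<Rightarrow> complex) \<Rightarrow> bool" where
  "good n h \<longleftrightarrow> h \<in> S \<and> (\<forall>N. h N \<noteq> 0 \<longrightarrow> Aset N \<and> absF (lam N) \<le> absF p ^ Suc n) \<and>
     (\<forall>c N. absF c \<le> absF p ^ Suc n \<longrightarrow> h (V c ** N) = h N)"

lemma Dcomp:
  fixes N :: "'a mat2"
  assumes h: "good n h" and pi: "absF t = absF p"
  shows "h (Dg t ** N) = (\<Sum>r\<in>R. h (V (- (p ^ n * r)) ** N))"
proof -
  have t: "t \<noteq> 0" using pi p_props(1) by auto
  have supp: "h X = 0" if "\<not> (Aset X \<and> absF (lam X) \<le> absF p ^ Suc n)" for X
    using h that unfolding good_def by blast
  have inv: "h (V c ** X) = h X" if "absF c \<le> absF p ^ Suc n" for c X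
    using h that unfolding good_def by blast
  have pp: "0 < absF p ^ n" using p_props(1) by simp
  show ?thesis
  proof (cases "Aset N")
    case False
    then show ?thesis using supp A_V A_D[OF t] by simp
  next
    case A: True
    let ?l = "lam N"
    show ?thesis
    proof (cases "absF ?l \<le> absF p ^ n")
      case True
      let ?y = "?l / p ^ n"
      have "absF ?y \<le> 1" using True pp by (simp add: abs_divide abs_power)
      then obtain r0 where r0: "r0 \<in> R" "absF (?y - r0) \<le> absF p" using R_props(4) by (auto simp: Oint_iff)
      have e: "?l - p ^ n * r0 = p ^ n * (?y - r0)" by (simp add: field_simps)
      have r0c: "absF (?l - p ^ n * r0) \<le> absF p ^ Suc n"
        unfolding e using r0(2) pp by (simp add: abs_mult abs_power mult.commute)
      have others: "h (V (- (p ^ n * r)) ** N) = 0" if r: "r \<in> R" "r \<noteq> r0" for r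
      proof (rule supp, rule notI)
        assume "Aset (V (- (p ^ n * r)) ** N) \<and> absF (lam (V (- (p ^ n * r)) ** N)) \<le> absF p ^ Suc n"
        then have c: "absF (?l - p ^ n * r) \<le> absF p ^ Suc n" using lam_V[OF A] by simp
        have "?y - r = (?l - p ^ n * r) / p ^ n" by (simp add: field_simps)
        then have "absF (?y - r) \<le> absF p" using c pp by (simp add: abs_divide abs_power pos_divide_le_eq mult.commute)
        then have "absF (r - r0) \<le> absF p"
          using abs_ultra_diff_le[of "?y - r0" "absF p" "?y - r"] r0(2) by simp
        then show False using R_props(5)[OF r(1) r0(1)] r(2) by blast
      qed
      have "(\<Sum>r\<in>R. h (V (- (p ^ n * r)) ** N)) = h (V (- (p ^ n * r0)) ** N)"
        using sum.remove[OF R_props(1) r0(1), of "\<lambda>r. h (V (- (p ^ n * r)) ** N)"] others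
        by simp
      moreover have "h (Dg t ** N) = h (V (- (p ^ n * r0)) ** N)"
      proof -
        let ?c = "t * ?l - (?l - p ^ n * r0)"
        have "absF (t * ?l) \<le> absF p ^ Suc n" using True pi p_props(1) by (simp add: abs_mult mult_left_mono)
        then have c: "absF ?c \<le> absF p ^ Suc n" using r0c by (rule abs_ultra_diff_le)
        have "Dg t ** N = V ?c ** (V (- (p ^ n * r0)) ** N)"
          unfolding VV using lam_prop[OF A] by (simp add: Dg_mult V_mult algebra_simps)
        then show ?thesis using inv[OF c] by simp
      qed
      ultimately show ?thesis by simp
    next
      case False
      have "h (Dg t ** N) = 0"
      proof (rule supp, rule notI)
        assume "Aset (Dg t ** N) \<and> absF (lam (Dg t ** N)) \<le> absF p ^ Suc n"
        then have "absF t * absF ?l \<le> absF p * absF p ^ n" using lam_D[OF t A] by (simp add: abs_mult)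
        then show False using False pi p_props(1) by simp
      qed
      moreover have "h (V (- (p ^ n * r)) ** N) = 0" if r: "r \<in> R" for r
      proof (rule supp, rule notI)
        assume "Aset (V (- (p ^ n * r)) ** N) \<and> absF (lam (V (- (p ^ n * r)) ** N)) \<le> absF p ^ Suc n"
        then have c: "absF (?l - p ^ n * r) \<le> absF p ^ Suc n" using lam_V[OF A] by simp
        have "absF (p ^ n * r) \<le> absF p ^ n" using R_props(2) r pp
          by (auto simp: abs_mult abs_power Oint_iff intro: mult_left_le)
        then have "absF (p ^ n * r) < absF ?l" using False by simp
        then have "absF (?l - p ^ n * r) = absF ?l" using abs_isosceles[of "- (p ^ n * r)" ?l] by simp
        moreover have "absF p ^ Suc n \<le> absF p ^ n" using p_props(1,2) by (simp add: mult_left_le_one_le)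
        ultimately show False using c False by simp
      qed
      ultimately show ?thesis by simp
    qed
  qed
qed


section \<open>Uniform local constancy\<close>

lemma lebesgue:
  assumes K: "compactin MS.mtopology K" "K \<subseteq> O1"
    and lc: "\<And>M. M \<in> O1 \<Longrightarrow> \<exists>r>0. \<forall>N\<in>O1. mat_dist absF M N < r \<longrightarrow> f N = f M"
  shows "\<exists>\<delta>>0. \<forall>M\<in>K. \<forall>N\<in>O1. mat_dist absF M N < \<delta> \<longrightarrow> f N = f M"
proof -
  obtain rr where rr: "\<And>M. M \<in> O1 \<Longrightarrow> rr M > 0 \<and> (\<forall>N\<in>O1. mat_dist absF M N < rr M \<longrightarrow> f N = f M)"
    using lc by metis
  let ?U = "(\<lambda>M. MS.mball M (rr M / 2)) ` K"
  have "\<forall>U\<in>?U. openin MS.mtopology U" by auto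
  moreover have "K \<subseteq> \<Union>?U"
  proof
    fix M assume "M \<in> K"
    then have "M \<in> MS.mball M (rr M / 2)" using rr K(2) by auto
    then show "M \<in> \<Union>?U" using \<open>M \<in> K\<close> by blast
  qed
  ultimately obtain F where F: "finite F" "F \<subseteq> ?U" "K \<subseteq> \<Union>F"
    using K(1) unfolding compactin_def by meson
  obtain K0 where K0: "K0 \<subseteq> K" "finite K0" "F = (\<lambda>M. MS.mball M (rr M / 2)) ` K0"
    using finite_subset_image[OF F(1,2)] by blast
  show ?thesis
  proof (cases "K0 = {}")
    case True
    then have "K = {}" using F(3) K0(3) by auto
    then show ?thesis by (intro exI[of _ 1]) auto
  next
    case False
    let ?d = "Min ((\<lambda>M. rr M / 2) ` K0)"
    have dpos: "?d > 0" using False K0 K(2) rr by (subst Min_gr_iff) auto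
    have dle: "?d \<le> rr M0 / 2" if "M0 \<in> K0" for M0 using that K0(2) by (intro Min_le) auto
    show ?thesis
    proof (intro exI[of _ ?d] conjI dpos ballI impI)
      fix M N assume M: "M \<in> K" and N: "N \<in> O1" and dMN: "mat_dist absF M N < ?d"
      obtain M0 where M0: "M0 \<in> K0" "M \<in> MS.mball M0 (rr M0 / 2)" using F(3) K0(3) M by blast
      have M0O: "M0 \<in> O1" using M0(1) K0(1) K(2) by blast
      have 1: "mat_dist absF M0 M < rr M0 / 2" using M0(2) by simp
      have "mat_dist absF M0 N < rr M0" using dist_triangle[of M0 N M] 1 dMN dle[OF M0(1)] by linarith
      then have "f N = f M0" using rr[OF M0O] N by blast
      moreover have "f M = f M0" using rr[OF M0O] 1 M K(2) by auto
      ultimately show "f N = f M" by simp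
    qed
  qed
qed

lemma bounded_entries:
  assumes "compactin MS.mtopology K"
  shows "\<exists>B>0. \<forall>M\<in>K. \<forall>i j. absF (M $ i $ j) \<le> B"
proof -
  obtain x Bd where x: "K \<subseteq> MS.mcball x Bd" using MS.compactin_imp_mbounded[OF assms] unfolding MS.mbounded_def by blast
  show ?thesis
  proof (intro exI[of _ "Cb x + \<bar>Bd\<bar>"] conjI ballI allI)
    show "0 < Cb x + \<bar>Bd\<bar>" using Cb_pos[of x] by simp
    fix M i j assume M: "M \<in> K"
    then have "mat_dist absF x M \<le> Bd" using x by auto
    then have "absF (M $ i $ j - x $ i $ j) \<le> \<bar>Bd\<bar>" using entry_le_dist[of x i j M] abs_diff_commute by smt
    moreover have "absF (x $ i $ j) \<le> Cb x" by (rule Cb_ge)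
    ultimately show "absF (M $ i $ j) \<le> Cb x + \<bar>Bd\<bar>"
      using abs_triangle[of "M $ i $ j - x $ i $ j" "x $ i $ j"] by simp
  qed
qed

lemma dist_V: "absF (N$1$1) \<le> B \<Longrightarrow> absF (N$1$2) \<le> B \<Longrightarrow> mat_dist absF N (V c ** N) \<le> absF c * B"
proof (rule dist_le)
  fix i j :: 2
  assume b: "absF (N$1$1) \<le> B" "absF (N$1$2) \<le> B"
  have "absF (c * N$1$1) \<le> absF c * B" "absF (c * N$1$2) \<le> absF c * B"
    using b by (simp_all add: abs_mult mult_left_mono)
  moreover have "0 \<le> B" using b(1) abs_nonneg[of "N$1$1"] by linarith
  then have "0 \<le> absF c * B" by simp
  ultimately show "absF (N $ i $ j - (V c ** N) $ i $ j) \<le> absF c * B"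
    using exhaust_2[of i] exhaust_2[of j] by (auto simp: V_mult)
qed

lemma dist_U: "absF (N$2$1) \<le> B \<Longrightarrow> absF (N$2$2) \<le> B \<Longrightarrow> mat_dist absF N (U c ** N) \<le> absF c * B"
proof (rule dist_le)
  fix i j :: 2
  assume b: "absF (N$2$1) \<le> B" "absF (N$2$2) \<le> B"
  have "absF (c * N$2$1) \<le> absF c * B" "absF (c * N$2$2) \<le> absF c * B"
    using b by (simp_all add: abs_mult mult_left_mono)
  moreover have "0 \<le> B" using b(1) abs_nonneg[of "N$2$1"] by linarith
  then have "0 \<le> absF c * B" by simp
  ultimately show "absF (N $ i $ j - (U c ** N) $ i $ j) \<le> absF c * B"
    using exhaust_2[of i] exhaust_2[of j] by (auto simp: U_mult)
qed

lemma unif: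
  assumes f: "f \<in> S"
  shows "\<exists>n. \<forall>c N. absF c \<le> absF p ^ Suc n \<longrightarrow> f (V c ** N) = f N \<and> f (U c ** N) = f N"
proof -
  obtain K where K: "compactin MS.mtopology K" "K \<subseteq> O1" "{M \<in> O1. f M \<noteq> 0} \<subseteq> K"
    using S_cpt[OF f] by blast
  obtain \<delta> where \<delta>: "\<delta> > 0" "\<forall>M\<in>K. \<forall>N\<in>O1. mat_dist absF M N < \<delta> \<longrightarrow> f N = f M"
    using lebesgue[OF K(1,2) S_lc[OF f]] by blast
  obtain B where B: "B > 0" "\<forall>M\<in>K. \<forall>i j. absF (M $ i $ j) \<le> B"
    using bounded_entries[OF K(1)] by blast
  obtain n where n: "absF p ^ n < \<delta> / B" using real_arch_pow_inv[of "\<delta> / B" "absF p"] \<delta>(1) B(1) p_props(2) by auto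
  have pn: "absF p ^ Suc n \<le> absF p ^ n" using p_props(1,2) by (simp add: mult_left_le_one_le)
  have gen: "f (g ** N) = f N"
    if g: "det g \<noteq> 0" and dd: "\<And>X. X \<in> K \<or> g ** X \<in> K \<Longrightarrow> mat_dist absF X (g ** X) < \<delta>" for g N
  proof (cases "N \<in> O1")
    case False
    then show ?thesis using S_vanish[OF f] O1_mult[OF g] by simp
  next
    case True
    then have N': "g ** N \<in> O1" using O1_mult[OF g] by simp
    show ?thesis
    proof (cases "f N = 0 \<and> f (g ** N) = 0")
      case True then show ?thesis by simp
    next
      case False
      then have "N \<in> K \<or> g ** N \<in> K" using K(3) True N' by blast
      then have d: "mat_dist absF N (g ** N) < \<delta>" using dd by blast
      show ?thesis
      proof (cases "N \<in> K")
        case True then show ?thesis using \<delta>(2) d N' by blast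
      next
        case False
        then have "g ** N \<in> K" using \<open>N \<in> K \<or> g ** N \<in> K\<close> by blast
        then show ?thesis using \<delta>(2) d True dist_commute by metis
      qed
    qed
  qed
  show ?thesis
  proof (intro exI[of _ n] allI impI conjI)
    fix c :: 'a and N :: "'a mat2"
    assume c: "absF c \<le> absF p ^ Suc n"
    have cB: "absF c * B < \<delta>"
    proof -
      have "absF c * B \<le> absF p ^ n * B" using c pn B(1) by (simp add: mult_right_mono)
      also have "\<dots> < \<delta>" using n B(1) by (simp add: pos_less_divide_eq)
      finally show ?thesis .
    qed
    show "f (V c ** N) = f N"
    proof (rule gen)
      fix X :: "'a mat2" assume "X \<in> K \<or> V c ** X \<in> K"
      then have "absF (X$1$1) \<le> B \<and> absF (X$1$2) \<le> B"
      proof (elim disjE)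
        assume "X \<in> K" then show ?thesis using B(2) by blast
      next
        assume "V c ** X \<in> K"
        then have "absF ((V c ** X)$1$1) \<le> B" "absF ((V c ** X)$1$2) \<le> B" using B(2) by blast+
        then show ?thesis by (simp add: V_mult)
      qed
      then show "mat_dist absF X (V c ** X) < \<delta>" using dist_V[of X B c] cB by linarith
    qed simp
    show "f (U c ** N) = f N"
    proof (rule gen)
      fix X :: "'a mat2" assume "X \<in> K \<or> U c ** X \<in> K"
      then have "absF (X$2$1) \<le> B \<and> absF (X$2$2) \<le> B"
      proof (elim disjE)
        assume "X \<in> K" then show ?thesis using B(2) by blast
      next
        assume "U c ** X \<in> K"
        then have "absF ((U c ** X)$2$1) \<le> B" "absF ((U c ** X)$2$2) \<le> B" using B(2) by blast+
        then show ?thesis by (simp add: U_mult)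
      qed
      then show "mat_dist absF X (U c ** X) < \<delta>" using dist_U[of X B c] cB by linarith
    qed simp
  qed
qed


definition ind :: "'a set \<Rightarrow> 'a mat2 \<Rightarrow> complex" where
  "ind C N = (if Aset N \<and> lam N \<in> C then 1 else 0)"

definition piece :: "('a mat2 \<Rightarrow> complex) \<Rightarrow> 'a set \<Rightarrow> 'a mat2 \<Rightarrow> complex" where
  "piece F C N = F N * ind C N"

lemma e_props: "0 \<le> absF p ^ m" "absF p ^ m \<le> 1" "0 < absF p ^ m"
  using p_props(1,2) by (simp_all add: power_le_one)

lemma lam_close:
  fixes M N :: "'a mat2"
  assumes AM: "Aset M" and j: "M$1$j \<noteq> 0" and N: "N \<in> O1"
    and d: "mat_dist absF M N < absF (M$1$j)"
  shows "Aset N \<and> absF (lam N - lam M) \<le> mat_dist absF M N * (absF (M$1$j) + absF (M$2$j)) / (absF (M$1$j) * absF (M$1$j))"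
proof -
  let ?s = "absF (M$1$j)" and ?t = "absF (M$2$j)" and ?d = "mat_dist absF M N"
  have s: "?s > 0" using j abs_pos by blast
  have "absF (M$1$j - N$1$j) < ?s" using dist_less_entry[OF d] .
  then have Nj: "absF (N$1$j) = ?s" using abs_isosceles_diff by blast
  then have Nj0: "N$1$j \<noteq> 0" using s by auto
  have AN: "Aset N"
  proof -
    have "j = 1 \<or> j = 2" using exhaust_2 by blast
    then show ?thesis using N Nj0 by (auto simp: Aset_def)
  qed
  have lM: "lam M = M$2$j / M$1$j" using lam_prop[OF AM] j exhaust_2[of j] by auto
  have lN: "lam N = N$2$j / N$1$j" using lam_prop[OF AN] Nj0 exhaust_2[of j] by auto
  have e: "lam N - lam M = ((N$2$j - M$2$j) * M$1$j - M$2$j * (N$1$j - M$1$j)) / (N$1$j * M$1$j)"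
    unfolding lM lN using j Nj0 by (simp add: field_simps)
  have 1: "absF ((N$2$j - M$2$j) * M$1$j) \<le> ?d * (?s + ?t)"
  proof -
    have "absF (N$2$j - M$2$j) \<le> ?d" using entry_le_dist[of M 2 j N] abs_diff_commute by metis
    then have "absF (N$2$j - M$2$j) * ?s \<le> ?d * ?s" using s by (simp add: mult_right_mono)
    also have "\<dots> \<le> ?d * (?s + ?t)" using dist_nonneg[of M N] by (simp add: mult_left_mono)
    finally show ?thesis by (simp add: abs_mult)
  qed
  have 2: "absF (M$2$j * (N$1$j - M$1$j)) \<le> ?d * (?s + ?t)"
  proof -
    have "absF (N$1$j - M$1$j) \<le> ?d" using entry_le_dist[of M 1 j N] abs_diff_commute by metis
    then have "?t * absF (N$1$j - M$1$j) \<le> ?t * ?d" by (simp add: mult_left_mono)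
    also have "\<dots> \<le> ?d * (?s + ?t)" using dist_nonneg[of M N] s by (simp add: algebra_simps)
    finally show ?thesis by (simp add: abs_mult)
  qed
  have "absF (lam N - lam M) = absF ((N$2$j - M$2$j) * M$1$j - M$2$j * (N$1$j - M$1$j)) / (?s * ?s)"
    unfolding e abs_divide abs_mult Nj ..
  also have "\<dots> \<le> ?d * (?s + ?t) / (?s * ?s)"
    using abs_ultra_diff_le[OF 1 2] s by (simp add: divide_right_mono)
  finally show ?thesis using AN by simp
qed

lemma ind_lc:
  fixes M :: "'a mat2"
  assumes C: "C \<in> Oint // Er (absF p ^ m)" and M: "M \<in> O1"
  shows "\<exists>r>0. \<forall>N\<in>O1. mat_dist absF M N < r \<longrightarrow> ind C N = ind C M"
proof (cases "Aset M")
  case True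
  then obtain j where j: "M$1$j \<noteq> 0" unfolding Aset_def by blast
  let ?s = "absF (M$1$j)" and ?t = "absF (M$2$j)" and ?e = "absF p ^ m"
  have s: "?s > 0" using j abs_pos by blast
  have st: "?s + ?t > 0" using s abs_nonneg[of "M$2$j"] by linarith
  define r where "r = min ?s (?e * (?s * ?s) / (?s + ?t))"
  have r: "r > 0" unfolding r_def using s st e_props(3)[of m] by simp
  show ?thesis
  proof (intro exI[of _ r] conjI r ballI impI)
    fix N assume N: "N \<in> O1" and d: "mat_dist absF M N < r"
    have dd: "mat_dist absF M N < ?s" using d unfolding r_def by simp
    obtain AN: "Aset N" and le: "absF (lam N - lam M) \<le> mat_dist absF M N * (?s + ?t) / (?s * ?s)"
      using lam_close[OF True j N dd] by blast
    have "mat_dist absF M N * (?s + ?t) < ?e * (?s * ?s)"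
      using d st unfolding r_def by (simp add: pos_less_divide_eq)
    then have "mat_dist absF M N * (?s + ?t) / (?s * ?s) < ?e" using s by (simp add: pos_divide_less_eq)
    then have cl: "absF (lam N - lam M) \<le> ?e" using le by linarith
    have cl': "absF (lam M - lam N) \<le> ?e" using cl by (simp add: abs_diff_commute)
    have "lam N \<in> C \<longleftrightarrow> lam M \<in> C"
      using class_closed[OF e_props(1,2) C, of "lam M" "lam N"] class_closed[OF e_props(1,2) C, of "lam N" "lam M"]
        cl cl' by blast
    then show "ind C N = ind C M" using AN True by (simp add: ind_def)
  qed
next
  case False
  then have r1: "M$1$1 = 0" "M$1$2 = 0" using M by (auto simp: Aset_def)
  then obtain j where j: "M$2$j \<noteq> 0" using M by (auto simp: O1_def zero_mat_iff)
  let ?t = "absF (M$2$j)"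
  have t: "?t > 0" using j abs_pos by blast
  show ?thesis
  proof (intro exI[of _ ?t] conjI t ballI impI)
    fix N assume N: "N \<in> O1" and d: "mat_dist absF M N < ?t"
    have "\<not> (Aset N \<and> lam N \<in> C)"
    proof
      assume a: "Aset N \<and> lam N \<in> C"
      then have "absF (lam N) \<le> 1" using class_sub[OF e_props(1) C] by (auto simp: Oint_iff)
      moreover have "N$2$j = lam N * N$1$j" using lam_prop[of N] a exhaust_2[of j] by auto
      ultimately have "absF (N$2$j) \<le> absF (N$1$j)" by (simp add: abs_mult mult_left_le_one_le)
      moreover have "absF (N$1$j) < ?t"
        using dist_less_entry[OF d, of 1 j] r1 exhaust_2[of j] by (auto simp: abs_diff_commute)
      moreover have "absF (N$2$j) = ?t"
        using abs_isosceles_diff[of "M$2$j" "N$2$j"] dist_less_entry[OF d, of 2 j] by simp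
      ultimately show False by simp
    qed
    then show "ind C N = ind C M" using False by (simp add: ind_def)
  qed
qed

lemma piece_S: "F \<in> S \<Longrightarrow> C \<in> Oint // Er (absF p ^ m) \<Longrightarrow> piece F C \<in> S"
  unfolding piece_def using S_mult_lc ind_lc by blast

lemma piece_V:
  fixes X :: "'a mat2"
  assumes C: "C \<in> Oint // Er (absF p ^ m)" and c: "absF c \<le> absF p ^ m"
    and F: "F (V c ** X) = F X"
  shows "piece F C (V c ** X) = piece F C X"
proof -
  have "Aset (V c ** X) \<and> lam (V c ** X) \<in> C \<longleftrightarrow> Aset X \<and> lam X \<in> C"
  proof (cases "Aset X")
    case True
    have "lam X + c \<in> C \<longleftrightarrow> lam X \<in> C"
      using class_closed[OF e_props(1,2) C, of "lam X + c" "lam X"] class_closed[OF e_props(1,2) C, of "lam X" "lam X + c"] c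
      by auto
    then show ?thesis using True A_V lam_V by simp
  qed (simp add: A_V)
  then show ?thesis using F by (simp add: piece_def ind_def)
qed

lemma piece_good:
  assumes F: "F \<in> S" and Finv: "\<And>c N. absF c \<le> absF p ^ Suc n \<Longrightarrow> F (V c ** N) = F N"
    and C: "C \<in> Oint // Er (absF p ^ Suc n)" and c0: "c0 \<in> C"
  shows "good n (\<lambda>N. piece F C (V c0 ** N))"
  unfolding good_def
proof (intro conjI)
  show "(\<lambda>N. piece F C (V c0 ** N)) \<in> S" using S_comp[OF piece_S[OF F C]] by simp
  show "\<forall>N. piece F C (V c0 ** N) \<noteq> 0 \<longrightarrow> Aset N \<and> absF (lam N) \<le> absF p ^ Suc n"
  proof (intro allI impI)
    fix N :: "'a mat2" assume "piece F C (V c0 ** N) \<noteq> 0"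
    then have a: "Aset (V c0 ** N) \<and> lam (V c0 ** N) \<in> C" by (auto simp: piece_def ind_def split: if_splits)
    then have AN: "Aset N" using A_V by simp
    then have "lam N + c0 \<in> C" using a lam_V by simp
    then have "absF ((lam N + c0) - c0) \<le> absF p ^ Suc n" using class_close[OF e_props(1) C _ c0] by blast
    then show "Aset N \<and> absF (lam N) \<le> absF p ^ Suc n" using AN by simp
  qed
  show "\<forall>c N. absF c \<le> absF p ^ Suc n \<longrightarrow> piece F C (V c0 ** (V c ** N)) = piece F C (V c0 ** N)"
  proof (intro allI impI)
    fix c and N :: "'a mat2" assume c: "absF c \<le> absF p ^ Suc n"
    have "V c0 ** (V c ** N) = V c ** (V c0 ** N)" by (simp add: VV add.commute)
    then show "piece F C (V c0 ** (V c ** N)) = piece F C (V c0 ** N)"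
      using piece_V[where F=F and X="V c0 ** N", OF C c Finv[OF c]] by simp
  qed
qed

lemma V_zero: fixes N :: "'a mat2" shows "V 0 ** N = N"
  by (simp add: V_mult mat_eq_iff)

lemma WV: fixes N :: "'a mat2" shows "Wm ** (V c ** N) = U c ** (Wm ** N)"
  by (simp add: Wm_mult V_mult U_mult mat_eq_iff)

lemma partition:
  fixes N :: "'a mat2"
  assumes N: "N \<in> O1"
  shows "(\<Sum>C \<in> Oint // Er (absF p ^ Suc n). ind C N)
       + (\<Sum>C \<in> {C \<in> Oint // Er (absF p ^ Suc n). \<forall>x\<in>C. absF x < 1}. ind C (Wm ** N)) = 1"
proof -
  let ?e = "absF p ^ Suc n"
  let ?Cl = "Oint // Er ?e"
  let ?Cl' = "{C \<in> ?Cl. \<forall>x\<in>C. absF x < 1}"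
  have e: "0 \<le> ?e" by simp
  have fin: "finite ?Cl" by (rule finite_classes)
  have fin': "finite ?Cl'" using fin by simp
  have WN: "Wm ** N \<in> O1" using O1_mult[of Wm N] N by simp
  have sum1: "(\<Sum>C\<in>A. (if x \<in> C then 1 else 0 :: complex)) = 1"
    if A: "finite A" "A \<subseteq> ?Cl" and x: "x \<in> Oint" and xA: "Er ?e `` {x} \<in> A" for A x
  proof -
    have "A \<inter> {C. x \<in> C} = {Er ?e `` {x}}"
      using class_unique[OF e] class_exists[OF e x] A(2) xA by blast
    then show ?thesis using A(1) by (simp add: sum.If_cases)
  qed
  have sum0: "(\<Sum>C\<in>A. (if P C then 1 else 0 :: complex)) = 0" if "\<forall>C\<in>A. \<not> P C" for A P
    using that by simp
  show ?thesis
  proof (cases "Aset N \<and> absF (lam N) \<le> 1")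
    case True
    have x: "lam N \<in> Oint" using True by (simp add: Oint_iff)
    have 1: "(\<Sum>C\<in>?Cl. ind C N) = 1"
      unfolding ind_def using True sum1[OF fin _ x] class_exists[OF e x] by simp
    have 2: "(\<Sum>C\<in>?Cl'. ind C (Wm ** N)) = 0"
      unfolding ind_def
    proof (rule sum0, rule ballI, rule notI)
      fix C assume C: "C \<in> ?Cl'" and a: "Aset (Wm ** N) \<and> lam (Wm ** N) \<in> C"
      then have mu: "absF (lam (Wm ** N)) < 1" by blast
      have r1: "N$1$1 = lam (Wm ** N) * N$2$1" "N$1$2 = lam (Wm ** N) * N$2$2"
        using lam_prop[of "Wm ** N"] a by (simp_all add: Wm_mult)
      have r2: "N$2$1 = lam N * N$1$1" "N$2$2 = lam N * N$1$2" using lam_prop[of N] True by simp_all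
      have "lam (Wm ** N) * lam N = 1"
      proof (cases "N$1$1 = 0")
        case True
        then have "N$1$2 \<noteq> 0" using \<open>Aset N \<and> _\<close> by (simp add: Aset_def)
        moreover have "N$1$2 = (lam (Wm ** N) * lam N) * N$1$2" using r1(2) r2(2) by (simp add: mult.assoc)
        ultimately show ?thesis by simp
      next
        case False
        moreover have "N$1$1 = (lam (Wm ** N) * lam N) * N$1$1" using r1(1) r2(1) by (simp add: mult.assoc)
        ultimately show ?thesis by simp
      qed
      then have "absF (lam (Wm ** N)) * absF (lam N) = 1" using abs_mult[of "lam (Wm ** N)" "lam N"] by simp
      moreover have "absF (lam (Wm ** N)) * absF (lam N) \<le> absF (lam (Wm ** N))"
        using True by (intro mult_left_le) simp_all
      ultimately show False using mu by simp
    qed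
    show ?thesis using 1 2 by simp
  next
    case False
    have 1: "(\<Sum>C\<in>?Cl. ind C N) = 0"
      unfolding ind_def
    proof (rule sum0, rule ballI, rule notI)
      fix C assume C: "C \<in> ?Cl" and a: "Aset N \<and> lam N \<in> C"
      then have "absF (lam N) \<le> 1" using class_sub[OF e C] by (auto simp: Oint_iff)
      then show False using False a by simp
    qed
    have r2nz: "N$2$1 \<noteq> 0 \<or> N$2$2 \<noteq> 0"
    proof (cases "Aset N")
      case True
      then have "absF (lam N) > 1" using False by simp
      then have "lam N \<noteq> 0" by auto
      then show ?thesis using lam_prop[OF True] True by (auto simp: Aset_def)
    next
      case False
      then show ?thesis using N by (auto simp: Aset_def O1_def zero_mat_iff)
    qed
    have AW: "Aset (Wm ** N)" using WN r2nz by (simp add: Aset_def Wm_mult)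
    let ?mu = "lam (Wm ** N)"
    have r1: "N$1$1 = ?mu * N$2$1" "N$1$2 = ?mu * N$2$2"
      using lam_prop[OF AW] by (simp_all add: Wm_mult)
    have mu: "absF ?mu < 1"
    proof (cases "Aset N")
      case False
      then have "N$1$1 = 0" "N$1$2 = 0" using N by (auto simp: Aset_def)
      then have "?mu = 0" using r1 r2nz by auto
      then show ?thesis by simp
    next
      case True
      then have big: "absF (lam N) > 1" using False by simp
      have r2: "N$2$1 = lam N * N$1$1" "N$2$2 = lam N * N$1$2" using lam_prop[OF True] by simp_all
      have "?mu * lam N = 1"
      proof (cases "N$2$1 = 0")
        case True
        then have "N$2$2 \<noteq> 0" using r2nz by simp
        moreover have "N$2$2 = (?mu * lam N) * N$2$2" using r1(2) r2(2) by (simp add: mult.assoc mult.commute)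
        ultimately show ?thesis by simp
      next
        case False
        moreover have "N$2$1 = (?mu * lam N) * N$2$1" using r1(1) r2(1) by (simp add: mult.assoc mult.commute)
        ultimately show ?thesis by simp
      qed
      then have pr: "absF ?mu * absF (lam N) = 1" using abs_mult[of ?mu "lam N"] by simp
      show ?thesis
      proof (rule ccontr)
        assume "\<not> absF ?mu < 1"
        then have "1 * absF (lam N) \<le> absF ?mu * absF (lam N)" by (intro mult_right_mono) simp_all
        then show False using pr big by simp
      qed
    qed
    have x: "?mu \<in> Oint" using mu by (simp add: Oint_iff)
    have inCl': "Er ?e `` {?mu} \<in> ?Cl'"
    proof -
      have "absF y < 1" if "y \<in> Er ?e `` {?mu}" for y
      proof -
        have "absF (y - ?mu) \<le> ?e" using that by (auto simp: Er_def abs_diff_commute)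
        moreover have "?e < 1" using power_Suc_less_one[OF p_props(1,2)] .
        ultimately have "absF (y - ?mu) < 1" by linarith
        then show ?thesis using abs_ultra_less[of "y - ?mu" 1 ?mu] mu by simp
      qed
      then show ?thesis using class_exists[OF e x] by blast
    qed
    have 2: "(\<Sum>C\<in>?Cl'. ind C (Wm ** N)) = 1"
      unfolding ind_def using AW sum1[OF fin' _ x inCl'] by simp
    show ?thesis using 1 2 by simp
  qed
qed

end

locale Key = NLF absF for absF :: "'a::field_char_0 \<Rightarrow> real" +
  fixes l :: "('a mat2 \<Rightarrow> complex) \<Rightarrow> complex"
  assumes l: "l \<in> S_dual absF"
    and H: "\<And>g h. det g \<noteq> 0 \<Longrightarrow> det h \<noteq> 0 \<Longrightarrow> act absF g (act_minus_id absF h l) = act_minus_id absF h l"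
begin

abbreviation phi where "phi g \<equiv> act_minus_id absF g l"

lemma pm: "det g \<noteq> 0 \<Longrightarrow> det h \<noteq> 0 \<Longrightarrow> phi (g ** h) f = phi g f + phi h f"
  using phi_mult[OF _ H] by simp

lemma conj:
  assumes a: "a ** b = mat 1" and g: "det g \<noteq> 0"
  shows "phi (a ** g ** b) f = phi g f"
proof -
  have "det a * det b = 1" using a det_mul[of a b] by (simp add: det_I)
  then have ab: "det a \<noteq> 0" "det b \<noteq> 0" by auto
  have "phi (a ** g ** b) f = phi a f + phi g f + phi b f"
    using pm[of a g] pm[of "a ** g" b] ab g by (simp add: det_mul)
  moreover have "phi a f + phi b f = 0" using pm[OF ab, of f] a phi_one[OF l] by simp
  ultimately show ?thesis by (simp add: algebra_simps)
qed

lemma phi_U: "phi (U x) f = 0"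
proof -
  have "mk 2 0 0 1 ** U x ** mk (1/2) 0 0 1 = U x ** U x"
    by (simp add: U_def mk_mult)
  moreover have "mk 2 0 0 1 ** mk (1/2) 0 0 (1::'a) = mat 1" by (simp add: mk_mult one_mat)
  ultimately have "phi (U x ** U x) f = phi (U x) f" using conj[of "mk 2 0 0 1" "mk (1/2) 0 0 1" "U x" f] by simp
  then show ?thesis using pm[of "U x" "U x" f] by simp
qed

lemma phi_V: "phi (V x) f = 0"
proof -
  have "mk 1 0 0 2 ** V x ** mk 1 0 0 (1/2) = V x ** V x"
    by (simp add: V_def mk_mult)
  moreover have "mk 1 0 0 2 ** mk 1 0 0 (1/2) = (mat 1 :: 'a mat2)" by (simp add: mk_mult one_mat)
  ultimately have "phi (V x ** V x) f = phi (V x) f" using conj[of "mk 1 0 0 2" "mk 1 0 0 (1/2)" "V x" f] by simp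
  then show ?thesis using pm[of "V x" "V x" f] by simp
qed

lemma phi_sl2:
  assumes "det h = 1" shows "phi h f = 0"
proof -
  have main: "phi h f = 0" if d: "det h = 1" and c: "h$2$1 \<noteq> 0" for h
  proof -
    have "h = U ((h$1$1 - 1) / h$2$1) ** V (h$2$1) ** U ((h$2$2 - 1) / h$2$1)"
      using c d unfolding U_def V_def
      by (simp add: mk_mult mat_eq_iff det_nth field_simps)
    then have "phi h f = phi (U ((h$1$1 - 1) / h$2$1) ** V (h$2$1) ** U ((h$2$2 - 1) / h$2$1)) f"
      by simp
    also have "\<dots> = 0" using pm phi_U phi_V by (simp add: det_mul)
    finally show ?thesis .
  qed
  show ?thesis
  proof (cases "h$2$1 = 0")
    case False then show ?thesis using main assms by blast
  next
    case True
    then have "h$1$1 \<noteq> 0" using assms by (auto simp: det_nth)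
    then have "(V 1 ** h) $ 2 $ 1 \<noteq> 0" using True by (simp add: V_def mult_nth)
    then have "phi (V 1 ** h) f = 0" using main assms by (simp add: det_mul)
    moreover have "h = V (-1) ** (V 1 ** h)"
      by (simp add: matrix_mul_assoc V_def mk_mult flip: one_mat)
    ultimately show ?thesis using pm[of "V (-1)" "V 1 ** h" f] phi_V assms by (simp add: det_mul)
  qed
qed

lemma phi_general:
  assumes Dz: "\<And>t f. t \<noteq> 0 \<Longrightarrow> phi (Dg t) f = 0" and g: "det g \<noteq> 0"
  shows "phi g f = 0"
proof -
  let ?h = "g ** Dg (1 / det g)"
  have "det ?h = 1" using g by (simp add: det_mul)
  moreover have "Dg (1 / det g) ** Dg (det g) = mat 1" using g by (simp add: Dg_def mk_mult one_mat)
  then have "g = ?h ** Dg (det g)"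
    by (metis matrix_mul_assoc matrix_mul_rid)
  ultimately have "phi g f = phi ?h f + phi (Dg (det g)) f" using pm[of ?h "Dg (det g)" f] g by simp
  then show ?thesis using phi_sl2[OF \<open>det ?h = 1\<close>] Dz[OF g] by simp
qed

lemma phi_D_all:
  assumes Dp: "\<And>t f. absF t = absF p \<Longrightarrow> phi (Dg t) f = 0"
  shows "t \<noteq> 0 \<Longrightarrow> phi (Dg t) f = 0"
proof -
  have DD: "Dg a ** Dg b = Dg (a * b)" for a b by (simp add: Dg_def mk_mult)
  have inv: "phi (Dg a) f = - phi (Dg (1/a)) f" if "a \<noteq> 0" for a f
    using pm[of "Dg a" "Dg (1/a)" f] that DD[of a "1/a"] phi_one[OF l]
    by (simp add: Dg_def one_mat eq_neg_iff_add_eq_0 det_mk)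
  have unit: "phi (Dg u) f = 0" if "absF u = 1" for u f
  proof -
    have u: "u \<noteq> 0" using that by auto
    have "Dg u = Dg (p * u) ** Dg (1 / p)" using DD by simp
    then have "phi (Dg u) f = phi (Dg (p * u)) f + phi (Dg (1 / p)) f" using pm u by simp
    moreover have "phi (Dg (p * u)) f = 0" using Dp that by (simp add: abs_mult)
    moreover have "phi (Dg (1/p)) f = 0" using inv[of p f] Dp[of p] by simp
    ultimately show ?thesis by simp
  qed
  have small: "phi (Dg t) f = 0" if "absF t = absF p ^ n" for n t f
    using that
  proof (induction n arbitrary: t)
    case 0 then show ?case using unit by simp
  next
    case (Suc n)
    have "absF (t / p) = absF p ^ n" using Suc.prems p_props(1) by (simp add: abs_divide)
    then have "phi (Dg (t / p)) f = 0" using Suc.IH by blast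
    moreover have "Dg t = Dg p ** Dg (t / p)" using DD by simp
    moreover have "t \<noteq> 0" using Suc.prems p_props(1) by (metis abs_zero_iff less_irrefl power_eq_0_iff)
    ultimately show ?case using pm[of "Dg p" "Dg (t/p)" f] Dp[of p f] by simp
  qed
  assume t: "t \<noteq> 0"
  show ?thesis
  proof (cases "absF t \<le> 1")
    case True then show ?thesis using abs_one_le[of t] abs_pos[OF t] small by blast
  next
    case False
    have "absF (1 / t) \<le> 1" "0 < absF (1/t)" using False t by (simp_all add: abs_divide abs_pos)
    then show ?thesis using abs_one_le[of "1/t"] small inv[OF t, of f] by fastforce
  qed
qed


lemma phi_dual: "det g \<noteq> 0 \<Longrightarrow> phi g \<in> Dl"
  using amid_in_dual[OF l] .

lemma phi_transfer:
  assumes "phi g f = 0" "f \<in> S" "det g \<noteq> 0" "det k \<noteq> 0"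
  shows "phi g (\<lambda>M. f (k ** M)) = 0"
proof -
  have "act' k (phi g) f = phi g f" using H[OF assms(4,3)] by simp
  then have "complex_of_real (absF (det k)) * phi g (\<lambda>M. f (k ** M)) = 0"
    using act_app[OF assms(2)] assms(1) by simp
  moreover have "complex_of_real (absF (det k)) \<noteq> 0" using assms(4) by simp
  ultimately show ?thesis by simp
qed

lemma l_V: "h \<in> S \<Longrightarrow> l (\<lambda>M. h (V c ** M)) = l h"
proof -
  assume h: "h \<in> S"
  have "phi (V c) h = 0" using phi_V .
  then show ?thesis using act_app[OF h, of "V c" l] by (simp add: act_minus_id_def)
qed

lemma phi_good:
  assumes h: "good n h" and t: "absF t = absF p"
  shows "phi (Dg t) h = 0"
proof -
  have hS: "h \<in> S" using h by (simp add: good_def)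
  have comp: "(\<lambda>M. h (Dg t ** M)) = (\<lambda>M. \<Sum>r\<in>R. h (V (- (p ^ n * r)) ** M))"
    using Dcomp[OF h t] by (rule ext)
  have "l (\<lambda>M. h (Dg t ** M)) = (\<Sum>r\<in>R. l (\<lambda>M. h (V (- (p ^ n * r)) ** M)))"
    unfolding comp by (rule dual_sum[OF l R_props(1)]) (simp add: S_comp[OF hS])
  also have "\<dots> = of_nat (card R) * l h" using l_V[OF hS] by simp
  finally have "act' (Dg t) l h = complex_of_real (absF t) * (of_nat (card R) * l h)"
    using act_app[OF hS] by simp
  also have "\<dots> = l h"
  proof -
    have "complex_of_real (absF t) * of_nat (card R) = complex_of_real (absF t * real (card R))" by simp
    also have "\<dots> = 1" using t R_props(3) p_props(4) q_pos by simp
    finally show ?thesis by (simp add: mult.assoc[symmetric])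
  qed
  finally show ?thesis by (simp add: act_minus_id_def)
qed

lemma phi_piece:
  assumes F: "F \<in> S" and Finv: "\<And>c N. absF c \<le> absF p ^ Suc n \<Longrightarrow> F (V c ** N) = F N"
    and C: "C \<in> Oint // Er (absF p ^ Suc n)" and t: "absF t = absF p"
  shows "phi (Dg t) (piece F C) = 0"
proof -
  have t0: "t \<noteq> 0" using t p_props(1) by auto
  let ?c0 = "rep C"
  have c0: "?c0 \<in> C" using rep_in[OF e_props(1) C] .
  let ?h = "\<lambda>N. piece F C (V ?c0 ** N)"
  have g: "good n ?h" by (rule piece_good[OF F Finv C c0])
  have h0: "phi (Dg t) ?h = 0" by (rule phi_good[OF g t])
  have hS: "?h \<in> S" using g by (simp add: good_def)
  have e: "piece F C = (\<lambda>N. ?h (V (- ?c0) ** N))"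
    by (rule ext) (simp add: VV V_zero)
  have "phi (Dg t) (\<lambda>N. ?h (V (- ?c0) ** N)) = 0" by (rule phi_transfer[OF h0 hS]) (simp_all add: t0)
  then show ?thesis by (subst e)
qed

lemma phi_Dp: "absF t = absF p \<Longrightarrow> phi (Dg t) f = 0"
proof -
  assume t: "absF t = absF p"
  have t0: "t \<noteq> 0" using t p_props(1) by auto
  have pd: "phi (Dg t) \<in> Dl" using phi_dual t0 by simp
  show ?thesis
  proof (cases "f \<in> S")
    case False
    then show ?thesis using dual_out[OF pd] by simp
  next
    case f: True
    obtain n where n: "\<And>c N. absF c \<le> absF p ^ Suc n \<Longrightarrow> f (V c ** N) = f N \<and> f (U c ** N) = f N"
      using unif[OF f] by blast
    let ?Cl = "Oint // Er (absF p ^ Suc n)"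
    let ?Cl' = "{C \<in> ?Cl. \<forall>x\<in>C. absF x < 1}"
    let ?fW = "\<lambda>N. f (Wm ** N)"
    have fin: "finite ?Cl" by (rule finite_classes)
    have fin': "finite ?Cl'" using fin by simp
    have fW: "?fW \<in> S" using S_comp[OF f] by simp
    have fWinv: "?fW (V c ** N) = ?fW N" if "absF c \<le> absF p ^ Suc n" for c N
      using n[OF that] by (simp add: WV)
    let ?A = "\<lambda>N. \<Sum>C\<in>?Cl. piece f C N"
    let ?B = "\<lambda>N. \<Sum>C\<in>?Cl'. piece ?fW C (Wm ** N)"
    have dec: "f = (\<lambda>N. ?A N + ?B N)"
    proof
      fix N :: "'a mat2"
      have "?A N + ?B N = f N * ((\<Sum>C\<in>?Cl. ind C N) + (\<Sum>C\<in>?Cl'. ind C (Wm ** N)))"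
        by (simp add: piece_def WW sum_distrib_left distrib_left)
      also have "\<dots> = f N"
      proof (cases "N \<in> O1")
        case True then show ?thesis using partition[OF True] by simp
      next
        case False then show ?thesis using S_vanish[OF f] by simp
      qed
      finally show "f N = ?A N + ?B N" by simp
    qed
    have AS: "?A \<in> S" using S_sum[OF fin] piece_S[OF f] by blast
    have BS: "?B \<in> S"
    proof (rule S_sum[OF fin'])
      fix C assume "C \<in> ?Cl'"
      then have C: "C \<in> ?Cl" by simp
      show "(\<lambda>N. piece ?fW C (Wm ** N)) \<in> S" by (rule S_comp[OF piece_S[OF fW C]]) simp
    qed
    have A0: "phi (Dg t) ?A = 0"
    proof -
      have "phi (Dg t) ?A = (\<Sum>C\<in>?Cl. phi (Dg t) (piece f C))"
        by (rule dual_sum[OF pd fin]) (rule piece_S[OF f])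
      also have "\<dots> = 0"
      proof (rule sum.neutral, rule ballI)
        fix C assume C: "C \<in> ?Cl"
        have fi: "f (V c ** N) = f N" if "absF c \<le> absF p ^ Suc n" for c N using n[OF that] by blast
        show "phi (Dg t) (piece f C) = 0" by (rule phi_piece[OF f fi C t])
      qed
      finally show ?thesis .
    qed
    have B0: "phi (Dg t) ?B = 0"
    proof -
      have "phi (Dg t) ?B = (\<Sum>C\<in>?Cl'. phi (Dg t) (\<lambda>N. piece ?fW C (Wm ** N)))"
      proof (rule dual_sum[OF pd fin'])
        fix C assume "C \<in> ?Cl'"
        then have C: "C \<in> ?Cl" by simp
        show "(\<lambda>N. piece ?fW C (Wm ** N)) \<in> S" by (rule S_comp[OF piece_S[OF fW C]]) simp
      qed
      also have "\<dots> = 0"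
      proof (rule sum.neutral, rule ballI)
        fix C assume "C \<in> ?Cl'"
        then have C: "C \<in> ?Cl" by simp
        have "phi (Dg t) (piece ?fW C) = 0" by (rule phi_piece[OF fW fWinv C t])
        then show "phi (Dg t) (\<lambda>N. piece ?fW C (Wm ** N)) = 0"
          using phi_transfer[OF _ piece_S[OF fW C]] t0 by simp
      qed
      finally show ?thesis .
    qed
    have "phi (Dg t) f = phi (Dg t) ?A + phi (Dg t) ?B"
      by (subst dec) (rule dual_add[OF pd AS BS])
    then show ?thesis using A0 B0 by simp
  qed
qed

lemma phi_zero: "det g \<noteq> 0 \<Longrightarrow> phi g = (\<lambda>f. 0)"
  using phi_general[OF phi_D_all[OF phi_Dp]] by blast

end

context NLF begin

lemma key_inv:
  assumes l: "l \<in> Dl" and H: "\<And>g h. det g \<noteq> 0 \<Longrightarrow> det h \<noteq> 0 \<Longrightarrow> act' g (amid h l) = amid h l"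
    and g: "det g \<noteq> 0"
  shows "act' g l = l"
proof -
  interpret K: Key absF l
    by (intro Key.intro NLF_axioms Key_axioms.intro l H)
  have "amid g l = (\<lambda>f. 0)" using K.phi_zero[OF g] .
  then show ?thesis by (simp add: act_minus_id_def fun_eq_iff)
qed

lemma gen_imp:
  "l \<in> Dl \<Longrightarrow> (\<forall>gs. length gs = Suc k \<and> set gs \<subseteq> GL2 \<longrightarrow> foldr amid gs l = (\<lambda>f. 0))
   \<Longrightarrow> (\<forall>g\<in>GL2. act' g l = l)"
proof (induction k arbitrary: l)
  case 0
  show ?case
  proof
    fix g :: "'a mat2" assume g: "g \<in> GL2"
    have "foldr amid [g] l = (\<lambda>f. 0)" using 0(2)[rule_format, of "[g]"] g by auto
    then show "act' g l = l" by (simp add: act_minus_id_def fun_eq_iff)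
  qed
next
  case (Suc k)
  have H: "act' h (amid g l) = amid g l" if g: "det g \<noteq> 0" and h: "det h \<noteq> 0" for g h
  proof -
    have "amid g l \<in> Dl" using amid_in_dual[OF Suc.prems(1) g] .
    moreover have "\<forall>gs. length gs = Suc k \<and> set gs \<subseteq> GL2 \<longrightarrow> foldr amid gs (amid g l) = (\<lambda>f. 0)"
    proof (intro allI impI)
      fix gs :: "'a mat2 list" assume gs: "length gs = Suc k \<and> set gs \<subseteq> GL2"
      then have "foldr amid (gs @ [g]) l = (\<lambda>f. 0)" using Suc.prems(2)[rule_format, of "gs @ [g]"] g by (auto simp: GL2_def)
      then show "foldr amid gs (amid g l) = (\<lambda>f. 0)" by simp
    qed
    ultimately have "\<forall>g\<in>GL2. act' g (amid g' l) = amid g' l" if "g' = g" for g'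
      using Suc.IH that by blast
    then show ?thesis using h by (auto simp: GL2_def)
  qed
  show ?case using key_inv[OF Suc.prems(1) H] by (auto simp: GL2_def)
qed

end

theorem lemma2p6:
  fixes absF :: "'a::field_char_0 \<Rightarrow> real"
    and l :: "('a mat2 \<Rightarrow> complex) \<Rightarrow> complex"
  assumes "nonarch_local_field absF"
  shows "gen_invariant absF l \<longleftrightarrow> invariant absF l"
proof -
  interpret NLF absF using assms by (rule NLF.intro)
  show ?thesis
  proof
    assume "gen_invariant absF l"
    then show "invariant absF l" unfolding gen_invariant_def invariant_def using gen_imp by blast
  next
    assume a: "invariant absF l"
    have "foldr amid gs l = (\<lambda>f. 0)" if "length gs = Suc 0" "set gs \<subseteq> GL2" for gs
    proof -
      have e: "gs = [hd gs]" using that(1) by (cases gs) auto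
      then have "hd gs \<in> GL2" using that(2) by (metis list.set_intros(1) subsetD)
      then have "act' (hd gs) l = l" using a by (auto simp: invariant_def)
      then show ?thesis by (subst e) (simp add: act_minus_id_def fun_eq_iff)
    qed
    then show "gen_invariant absF l" using a unfolding gen_invariant_def invariant_def by blast
  qed
qed

end
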